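(* Let $k\ge0$ be an integer, $0<R_1<R_2<R$, $A=\{z:R_1<|z|<R_2\}\subset\Delta_R=\{|z|<R\}$, and $\omega=z^kdz$ on $\Delta_R$. Let $U\subset\mathbb C^n$ be a neighborhood of $\mathbf 0$ and $\alpha:\Delta_R\times U\to\mathbb C$, $(z,\mathbf u)\mapsto\alpha_{\mathbf u}(z)$, a holomorphic map with $\alpha_{\mathbf 0}\equiv0$, and let $\omega_{\mathbf u}=\left(z^k+\frac{\alpha_{\mathbf u}(z)}{z}\right)dz$. Let $\theta_j=e^{2\pi ij/(k+1)}$ be a $(k+1)$st root of unity, $p\in A$, and $\sigma:U\to\Delta_R$ holomorphic with $\sigma(\mathbf 0)=\theta_jp$. Then there exist a neighborhood $U_{\mathbf 0}\subset U$ of $\mathbf 0$ and a holomorphic map $\phi:A\times U_{\mathbf 0}\to\Delta_R$, $(z,\mathbf u)\mapsto\phi_{\mathbf u}(z)$, such that $\phi_{\mathbf u}^*(\omega_{\mathbf u})=\left(z^k+\frac{\alpha_{\mathbf u}(0)}{z}\right)dz$ for all $\mathbf u\in U_{\mathbf 0}$, $\phi_{\mathbf 0}(z)=\theta_jz$ for all $z\in A$, and $\phi_{\mathbf u}(p)=\sigma(\mathbf u)$ for all $\mathbf u\in U_{\mathbf 0}$. *)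

theory Defs
  imports "HOL-Analysis.Analysis"
begin

definition cscale :: "complex \<Rightarrow> complex ^ 'n \<Rightarrow> complex ^ 'n" where
  "cscale c v = (\<chi> i. c * v $ i)"

definition holo_vec :: "(complex ^ 'n \<Rightarrow> complex) \<Rightarrow> (complex ^ 'n) set \<Rightarrow> bool" where
  "holo_vec f S \<longleftrightarrow> (\<forall>x\<in>S. \<exists>L. (f has_derivative L) (at x) \<and>
       (\<forall>c v. L (cscale c v) = c * L v))"

definition holo_prod :: "(complex \<times> (complex ^ 'n) \<Rightarrow> complex) \<Rightarrow> (complex \<times> (complex ^ 'n)) set \<Rightarrow> bool" where
  "holo_prod f S \<longleftrightarrow> (\<forall>x\<in>S. \<exists>L. (f has_derivative L) (at x) \<and>
       (\<forall>c w v. L (c * w, cscale c v) = c * L (w, v)))"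

end

theory Submission
  imports Defs "HOL-Complex_Analysis.Complex_Analysis"
begin

class csc = real_normed_vector +
  fixes csmul :: "complex \<Rightarrow> 'a \<Rightarrow> 'a"
  assumes csmul_add: "csmul c (x + y) = csmul c x + csmul c y"
    and csmul_add2: "csmul (a + b) x = csmul a x + csmul b x"
    and csmul_of_real: "csmul (of_real r) x = r *\<^sub>R x"
    and csmul_assoc: "csmul a (csmul b x) = csmul (a*b) x"
    and norm_csmul: "norm (csmul c x) = norm c * norm x"

instantiation complex :: csc
begin
definition csmul_complex :: "complex \<Rightarrow> complex \<Rightarrow> complex" where "csmul_complex c x = c * x"
instance by standard (auto simp: csmul_complex_def algebra_simps norm_mult scaleR_conv_of_real)
end

instantiation vec :: (csc, finite) csc
begin
definition csmul_vec :: "complex \<Rightarrow> ('a,'b) vec \<Rightarrow> ('a,'b) vec" where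
  "csmul_vec c x = (\<chi> i. csmul c (x $ i))"
instance
proof
  fix c a b :: complex and x y :: "('a,'b) vec" and r :: real
  show "csmul c (x + y) = csmul c x + csmul c y" by (simp add: csmul_vec_def vec_eq_iff csmul_add)
  show "csmul (a + b) x = csmul a x + csmul b x" by (simp add: csmul_vec_def vec_eq_iff csmul_add2)
  show "csmul (of_real r) x = r *\<^sub>R x" by (simp add: csmul_vec_def vec_eq_iff csmul_of_real)
  show "csmul a (csmul b x) = csmul (a*b) x" by (simp add: csmul_vec_def vec_eq_iff csmul_assoc)
  show "norm (csmul c x) = norm c * norm x"
    by (simp add: csmul_vec_def norm_vec_def norm_csmul L2_set_right_distrib)
qed
end

instantiation prod :: (csc, csc) csc
begin
definition csmul_prod :: "complex \<Rightarrow> 'a \<times> 'b \<Rightarrow> 'a \<times> 'b" where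
  "csmul_prod c x = (csmul c (fst x), csmul c (snd x))"
instance
proof
  fix c a b :: complex and x y :: "'a \<times> 'b" and r :: real
  show "csmul c (x + y) = csmul c x + csmul c y" by (simp add: csmul_prod_def csmul_add)
  show "csmul (a + b) x = csmul a x + csmul b x" by (simp add: csmul_prod_def csmul_add2)
  show "csmul (of_real r) x = r *\<^sub>R x" by (simp add: csmul_prod_def csmul_of_real prod_eq_iff)
  show "csmul a (csmul b x) = csmul (a*b) x" by (simp add: csmul_prod_def csmul_assoc)
  show "norm (csmul c x) = norm c * norm x"
    by (simp add: csmul_prod_def norm_prod_def norm_csmul power_mult_distrib
        real_sqrt_mult flip: distrib_left)
qed
end

lemma csmul_complex_eq[simp]: "csmul c (x::complex) = c * x"
  by (simp add: csmul_complex_def)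

lemma csmul_prod_eq[simp]: "csmul c (x, y) = (csmul c x, csmul c y)"
  by (simp add: csmul_prod_def)

lemma cscale_eq: "cscale c v = csmul c v"
  by (simp add: cscale_def csmul_vec_def)

lemma csmul_zero[simp]: "csmul c 0 = 0"
  by (metis add_cancel_right_right csmul_add)

lemma csmul_zero_left[simp]: "csmul 0 x = 0"
  using csmul_of_real[of 0 x] by simp

lemma csmul_one[simp]: "csmul 1 x = x"
  using csmul_of_real[of 1 x] by simp

definition clin :: "('a::csc \<Rightarrow> 'b::csc) \<Rightarrow> bool" where
  "clin L \<longleftrightarrow> (\<forall>c x. L (csmul c x) = csmul c (L x))"

definition hat :: "('a::csc \<Rightarrow> 'b::csc) \<Rightarrow> 'a \<Rightarrow> bool" where
  "hat f x \<longleftrightarrow> (\<exists>L. (f has_derivative L) (at x) \<and> clin L)"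

lemma holo_prod_hat: "holo_prod f S \<longleftrightarrow> (\<forall>x\<in>S. hat f x)"
  unfolding holo_prod_def hat_def clin_def
  by (simp add: cscale_eq split_paired_All)

lemma holo_vec_hat: "holo_vec f S \<longleftrightarrow> (\<forall>x\<in>S. hat f x)"
  unfolding holo_vec_def hat_def clin_def
  by (simp add: cscale_eq)

lemma hat_const: "hat (\<lambda>x. c) x"
  unfolding hat_def clin_def by (auto intro!: exI[of _ "\<lambda>_. 0"] derivative_eq_intros)

lemma hat_ident: "hat (\<lambda>x. x) x"
  unfolding hat_def clin_def by (auto intro!: exI[of _ "\<lambda>x. x"] derivative_eq_intros)

lemma hat_fst: "hat fst x"
  unfolding hat_def clin_def by (auto intro!: exI[of _ fst] derivative_eq_intros simp: csmul_prod_def)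

lemma hat_snd: "hat snd x"
  unfolding hat_def clin_def by (auto intro!: exI[of _ snd] derivative_eq_intros simp: csmul_prod_def)

lemma hat_compose:
  assumes "hat f x" "hat g (f x)"
  shows "hat (\<lambda>x. g (f x)) x"
proof -
  obtain F G where F: "(f has_derivative F) (at x)" "clin F"
    and G: "(g has_derivative G) (at (f x))" "clin G" using assms unfolding hat_def by blast
  have "((\<lambda>x. g (f x)) has_derivative (\<lambda>y. G (F y))) (at x)"
    using has_derivative_compose[OF F(1) G(1)] by (simp add: o_def)
  moreover have "clin (\<lambda>y. G (F y))" using F(2) G(2) by (simp add: clin_def)
  ultimately show ?thesis unfolding hat_def by blast
qed

lemma hat_pair:
  assumes "hat f x" "hat g x"
  shows "hat (\<lambda>x. (f x, g x)) x"
proof -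
  obtain F G where F: "(f has_derivative F) (at x)" "clin F"
    and G: "(g has_derivative G) (at x)" "clin G" using assms unfolding hat_def by blast
  have "((\<lambda>x. (f x, g x)) has_derivative (\<lambda>y. (F y, G y))) (at x)"
    using has_derivative_Pair[OF F(1) G(1)] .
  moreover have "clin (\<lambda>y. (F y, G y))" using F(2) G(2) by (simp add: clin_def)
  ultimately show ?thesis unfolding hat_def by blast
qed

lemma hat_field:
  fixes f :: "'a::csc \<Rightarrow> complex"
  assumes "(g has_field_derivative d) (at (f x))" "hat f x"
  shows "hat (\<lambda>x. g (f x)) x"
proof -
  obtain F where F: "(f has_derivative F) (at x)" "clin F" using assms unfolding hat_def by blast
  have "((\<lambda>x. g (f x)) has_derivative (\<lambda>y. d * F y)) (at x)"
    using has_derivative_compose[OF F(1) assms(1)[unfolded has_field_derivative_def]] by (simp add: o_def)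
  moreover have "clin (\<lambda>y. d * F y)" using F(2) by (simp add: clin_def)
  ultimately show ?thesis unfolding hat_def by blast
qed

lemma hat_add:
  fixes f g :: "'a::csc \<Rightarrow> complex"
  assumes "hat f x" "hat g x"
  shows "hat (\<lambda>x. f x + g x) x"
proof -
  obtain F G where F: "(f has_derivative F) (at x)" "clin F"
    and G: "(g has_derivative G) (at x)" "clin G" using assms unfolding hat_def by blast
  have "((\<lambda>x. f x + g x) has_derivative (\<lambda>y. F y + G y)) (at x)"
    using has_derivative_add[OF F(1) G(1)] .
  moreover have "clin (\<lambda>y. F y + G y)" using F(2) G(2) by (simp add: clin_def algebra_simps)
  ultimately show ?thesis unfolding hat_def by blast
qed

lemma hat_mult:
  fixes f g :: "'a::csc \<Rightarrow> complex"
  assumes "hat f x" "hat g x"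
  shows "hat (\<lambda>x. f x * g x) x"
proof -
  obtain F G where F: "(f has_derivative F) (at x)" "clin F"
    and G: "(g has_derivative G) (at x)" "clin G" using assms unfolding hat_def by blast
  have "((\<lambda>x. f x * g x) has_derivative (\<lambda>y. f x * G y + F y * g x)) (at x)"
    using has_derivative_mult[OF F(1) G(1)] .
  moreover have "clin (\<lambda>y. f x * G y + F y * g x)" using F(2) G(2) by (simp add: clin_def algebra_simps)
  ultimately show ?thesis unfolding hat_def by blast
qed

lemma hat_minus:
  fixes f g :: "'a::csc \<Rightarrow> complex"
  assumes "hat f x" "hat g x"
  shows "hat (\<lambda>x. f x - g x) x"
proof -
  have "hat (\<lambda>x. f x + (-1) * g x) x" by (intro hat_add hat_mult hat_const assms)
  then show ?thesis by simp
qed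

lemma hat_imp_continuous: "hat f x \<Longrightarrow> continuous (at x) f"
  unfolding hat_def using has_derivative_continuous by blast

lemma hat_transform:
  assumes "hat f x" "open S" "x \<in> S" "\<And>y. y \<in> S \<Longrightarrow> g y = f y"
  shows "hat g x"
proof -
  obtain F where F: "(f has_derivative F) (at x)" "clin F" using assms unfolding hat_def by blast
  have "(g has_derivative F) (at x)"
    using has_derivative_transform_within_open[OF F(1) assms(2,3)] assms(4) by metis
  then show ?thesis using F(2) unfolding hat_def by blast
qed


lemma bounded_linear_csmul_left: "bounded_linear (\<lambda>s. csmul s (y::'a::csc))"
proof
  fix a b :: complex and r :: real
  show "csmul (a + b) y = csmul a y + csmul b y" by (rule csmul_add2)
  have "csmul (r *\<^sub>R a) y = csmul (of_real r) (csmul a y)"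
    by (simp add: csmul_assoc scaleR_conv_of_real)
  then show "csmul (r *\<^sub>R a) y = r *\<^sub>R csmul a y" by (simp add: csmul_of_real)
  show "\<exists>K. \<forall>x. norm (csmul x y) \<le> norm x * K"
    by (rule exI[of _ "norm y"]) (simp add: norm_csmul)
qed

lemma csmul_scaleR: "csmul c (r *\<^sub>R (x::'a::csc)) = r *\<^sub>R csmul c x"
  by (metis csmul_assoc csmul_of_real mult.commute)

lemma clin_scaleR:
  assumes "clin L" shows "L (r *\<^sub>R x) = r *\<^sub>R L x"
  using assms unfolding clin_def by (metis csmul_of_real)

lemma line_deriv:
  fixes f :: "'a::csc \<Rightarrow> complex"
  assumes "(f has_derivative L) (at (x + csmul s y))" "clin L"
  shows "((\<lambda>s. f (x + csmul s y)) has_field_derivative L y) (at s)"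
proof -
  have d: "((\<lambda>s. x + csmul s y) has_derivative (\<lambda>t. csmul t y)) (at s)"
    using bounded_linear_imp_has_derivative[OF bounded_linear_csmul_left[of y]]
    by (auto intro!: derivative_eq_intros)
  have "((\<lambda>s. f (x + csmul s y)) has_derivative (\<lambda>t. L (csmul t y))) (at s)"
    using has_derivative_compose[OF d assms(1)] by (simp add: o_def)
  moreover have "(\<lambda>t. L (csmul t y)) = (\<lambda>t. L y * t)"
    using assms(2) by (auto simp: clin_def mult.commute)
  ultimately show ?thesis by (simp add: has_field_derivative_def)
qed

definition Dv :: "('a::csc \<Rightarrow> 'b::csc) \<Rightarrow> 'a \<Rightarrow> 'a \<Rightarrow> 'b" where
  "Dv f x = (SOME L. (f has_derivative L) (at x) \<and> clin L)"

lemma Dv: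
  assumes "hat f x"
  shows "(f has_derivative Dv f x) (at x)" "clin (Dv f x)" "bounded_linear (Dv f x)"
proof -
  have "(f has_derivative Dv f x) (at x) \<and> clin (Dv f x)"
    using assms unfolding hat_def Dv_def by (rule someI_ex)
  then show "(f has_derivative Dv f x) (at x)" "clin (Dv f x)" "bounded_linear (Dv f x)"
    using has_derivative_bounded_linear by auto
qed

lemma hat_deriv_cont:
  fixes f :: "'a::{csc,heine_borel} \<Rightarrow> complex"
  assumes S: "open S" and hf: "\<forall>x\<in>S. hat f x"
  shows "continuous_on S (\<lambda>x. Blinfun (Dv f x))"
  unfolding continuous_on_iff
proof (intro ballI allI impI)
  fix x0 and e :: real assume x0: "x0 \<in> S" and e: "e > 0"
  obtain \<rho>0 where \<rho>0: "\<rho>0 > 0" "cball x0 \<rho>0 \<subseteq> S"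
    using S x0 open_contains_cball by blast
  define \<rho> where "\<rho> = \<rho>0/2"
  have \<rho>: "\<rho> > 0" "cball x0 (2*\<rho>) \<subseteq> S" using \<rho>0 by (auto simp: \<rho>_def)
  have contf: "continuous_on S f"
    using hf hat_imp_continuous continuous_at_imp_continuous_on by blast
  have "uniformly_continuous_on (cball x0 (2*\<rho>)) f"
    by (rule compact_uniformly_continuous[OF continuous_on_subset[OF contf \<rho>(2)] compact_cball])
  moreover have "e * \<rho> / 4 > 0" using e \<rho> by simp
  ultimately obtain d1 where d1: "d1 > 0" "\<And>a b. a \<in> cball x0 (2*\<rho>) \<Longrightarrow> b \<in> cball x0 (2*\<rho>) \<Longrightarrow>
      dist a b < d1 \<Longrightarrow> dist (f a) (f b) < e * \<rho> / 4"
    unfolding uniformly_continuous_on_def by metis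
  show "\<exists>d>0. \<forall>x\<in>S. dist x x0 < d \<longrightarrow> dist (Blinfun (Dv f x)) (Blinfun (Dv f x0)) < e"
  proof (intro exI[of _ "min \<rho> d1"] conjI ballI impI)
    show "min \<rho> d1 > 0" using \<rho> d1 by simp
    fix x assume xS: "x \<in> S" and dx: "dist x x0 < min \<rho> d1"
    have key: "norm (Dv f x y - Dv f x0 y) \<le> e/4" if ny: "norm y = 1" for y
    proof -
      define g where "g = (\<lambda>s. f (x + csmul s y) - f (x0 + csmul s y))"
      have inb: "x' + csmul s y \<in> ball x0 (2*\<rho>)" if "dist x' x0 < \<rho>" "norm s \<le> \<rho>" for x' s
      proof -
        have "dist (x' + csmul s y) x0 \<le> dist x' x0 + norm (csmul s y)"
          using norm_triangle_ineq[of "x' - x0" "csmul s y"] by (simp add: dist_norm algebra_simps)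
        also have "\<dots> < 2*\<rho>" using that by (simp add: norm_csmul ny)
        finally show ?thesis by (simp add: dist_commute)
      qed
      have x0r: "dist x0 x0 < \<rho>" using \<rho> by simp
      have xr: "dist x x0 < \<rho>" using dx by simp
      have sub: "ball x0 (2*\<rho>) \<subseteq> S" using \<rho>(2) by auto
      have dg: "(g has_field_derivative (Dv f (x + csmul s y) y - Dv f (x0 + csmul s y) y)) (at s)"
        if "norm s \<le> \<rho>" for s
      proof -
        have h1: "hat f (x + csmul s y)" using hf inb[OF xr that] sub by blast
        have h2: "hat f (x0 + csmul s y)" using hf inb[OF x0r that] sub by blast
        show ?thesis unfolding g_def
          by (intro DERIV_diff line_deriv[OF Dv(1)[OF h1] Dv(2)[OF h1]]
              line_deriv[OF Dv(1)[OF h2] Dv(2)[OF h2]])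
      qed
      have holg: "g holomorphic_on ball 0 \<rho>"
        unfolding holomorphic_on_def field_differentiable_def
        using dg by (meson has_field_derivative_at_within less_imp_le mem_ball_0)
      have contg: "continuous_on (cball 0 \<rho>) g"
        using dg by (meson DERIV_isCont continuous_at_imp_continuous_on mem_cball_0)
      have bnd: "norm (g s) \<le> e * \<rho> / 4" if "norm (0 - s) = \<rho>" for s
      proof -
        have ns: "norm s \<le> \<rho>" using that by simp
        have "dist (f (x + csmul s y)) (f (x0 + csmul s y)) < e * \<rho> / 4"
          apply (rule d1(2))
          using inb[OF xr ns] inb[OF x0r ns] dx by (auto simp: dist_norm)
        then show ?thesis by (simp add: g_def dist_norm)
      qed
      have "norm ((deriv ^^ 1) g 0) \<le> fact 1 * (e * \<rho> / 4) / \<rho> ^ 1"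
        by (rule Cauchy_inequality[OF holg contg \<rho>(1) bnd])
      moreover have "deriv g 0 = Dv f x y - Dv f x0 y"
        using DERIV_imp_deriv[OF dg[of 0]] \<rho> by simp
      ultimately show ?thesis using \<rho> by simp
    qed
    have bl: "bounded_linear (Dv f x)" "bounded_linear (Dv f x0)"
      using Dv(3) hf xS x0 by auto
    have "norm (Blinfun (Dv f x) - Blinfun (Dv f x0)) \<le> e/4"
    proof (rule norm_blinfun_bound)
      show "0 \<le> e/4" using e by simp
      fix y
      show "norm (blinfun_apply (Blinfun (Dv f x) - Blinfun (Dv f x0)) y) \<le> e / 4 * norm y"
      proof (cases "y = 0")
        case True then show ?thesis using bl by (simp add: bounded_linear_Blinfun_apply blinfun.diff_left linear_simps)
      next
        case False
        define y1 where "y1 = (1/norm y) *\<^sub>R y"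
        have n1: "norm y1 = 1" using False by (simp add: y1_def)
        have yy: "y = norm y *\<^sub>R y1" using False by (simp add: y1_def)
        have "Dv f x y - Dv f x0 y = norm y *\<^sub>R (Dv f x y1 - Dv f x0 y1)"
          using bl by (subst (1 2) yy) (simp add: linear_simps scaleR_diff_right)
        then have "norm (Dv f x y - Dv f x0 y) = norm y * norm (Dv f x y1 - Dv f x0 y1)"
          by simp
        also have "\<dots> \<le> norm y * (e/4)" using key[OF n1] by (intro mult_left_mono) auto
        finally show ?thesis using bl by (simp add: bounded_linear_Blinfun_apply blinfun.diff_left mult.commute)
      qed
    qed
    then show "dist (Blinfun (Dv f x)) (Blinfun (Dv f x0)) < e"
      using e by (simp add: dist_norm)
  qed
qed


lemma Re_pos_not_nonpos: "Re z > 0 \<Longrightarrow> z \<notin> \<real>\<^sub>\<le>\<^sub>0"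
  by (auto simp: complex_nonpos_Reals_iff)

lemma one_minus_small: "norm (q::complex) < 1 \<Longrightarrow> 1 - q \<notin> \<real>\<^sub>\<le>\<^sub>0"
  apply (rule Re_pos_not_nonpos)
  using abs_Re_le_cmod[of q] by auto

lemma hat_slice1:
  fixes f :: "complex \<times> 'b::csc \<Rightarrow> complex"
  assumes "hat f (w, u)"
  shows "((\<lambda>w. f (w, u)) has_field_derivative Dv f (w, u) (1, 0)) (at w)"
proof -
  have d: "((\<lambda>w. (w, u)) has_derivative (\<lambda>t. (t, 0))) (at w)"
    by (auto intro!: derivative_eq_intros)
  have "((\<lambda>w. f (w, u)) has_derivative (\<lambda>t. Dv f (w,u) (t, 0))) (at w)"
    using has_derivative_compose[OF d Dv(1)[OF assms]] by (simp add: o_def)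
  moreover have "(\<lambda>t. Dv f (w,u) (t, 0)) = (\<lambda>t. Dv f (w,u) (1,0) * t)"
  proof
    fix t have "(t, 0::'b) = csmul t (1, 0)" by simp
    then show "Dv f (w,u) (t, 0) = Dv f (w,u) (1,0) * t"
      using Dv(2)[OF assms] unfolding clin_def by (metis csmul_complex_eq mult.commute)
  qed
  ultimately show ?thesis by (simp add: has_field_derivative_def)
qed

definition gam :: "real \<Rightarrow> real \<Rightarrow> complex" where
  "gam \<rho> t = of_real \<rho> * exp (2 * of_real pi * \<i> * of_real t)"

lemma norm_gam[simp]: "\<rho> \<ge> 0 \<Longrightarrow> norm (gam \<rho> t) = \<rho>"
  by (simp add: gam_def norm_mult)

lemma gam_circlepath: "circlepath 0 \<rho> t = gam \<rho> t"
  by (simp add: circlepath gam_def)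

lemma continuous_gam[continuous_intros]: "continuous_on S f \<Longrightarrow> continuous_on S (\<lambda>x. gam \<rho> (f x))"
  unfolding gam_def by (intro continuous_intros)

definition Bfun :: "(complex \<times> 'v \<Rightarrow> complex) \<Rightarrow> real \<Rightarrow> complex \<times> 'v \<Rightarrow> complex" where
  "Bfun \<alpha> \<rho> x = integral {0..1} (\<lambda>t. - \<alpha> (gam \<rho> t, snd x) * Ln (1 - fst x / gam \<rho> t))"

locale Bsetup =
  fixes \<alpha> :: "complex \<times> (complex ^ 'n::finite) \<Rightarrow> complex" and R \<rho> \<delta> :: real
    and U :: "(complex ^ 'n) set"
  assumes U: "open U" and h\<alpha>: "\<forall>x\<in>ball 0 R \<times> U. hat \<alpha> x"
    and \<rho>: "0 < \<rho>" "\<rho> < R" and \<delta>: "\<delta> > 0" "ball 0 \<delta> \<subseteq> U"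
begin

abbreviation "D \<equiv> ball (0::complex) \<rho> \<times> ball (0::complex^'n) \<delta>"

lemma open_D: "open D" by (simp add: open_Times)

lemma convex_D: "convex D" using convex_Times[OF convex_ball convex_ball] by blast

lemma gam_in: "(gam \<rho> t, u) \<in> ball 0 R \<times> U" if "u \<in> ball 0 \<delta>"
  using \<rho> \<delta> that by auto

lemma q_small: "x \<in> D \<Longrightarrow> norm (fst x / gam \<rho> t) < 1"
  using \<rho> by (auto simp: norm_divide divide_less_eq)

lemma cont_\<alpha>: "continuous_on (ball 0 R \<times> U) \<alpha>"
  using h\<alpha> hat_imp_continuous continuous_at_imp_continuous_on by blast

definition fx :: "complex \<times> (complex ^ 'n) \<Rightarrow> real \<Rightarrow> (complex \<times> (complex ^ 'n)) \<Rightarrow>\<^sub>L complex" where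
  "fx x t = (blinfun_mult_right (- Ln (1 - fst x / gam \<rho> t)) o\<^sub>L
      (Blinfun (Dv \<alpha> (gam \<rho> t, snd x)) o\<^sub>L Blinfun (\<lambda>y. (0, snd y))))
   + (blinfun_mult_right (\<alpha> (gam \<rho> t, snd x) / (gam \<rho> t - fst x)) o\<^sub>L Blinfun fst)"

lemma bl_P2: "bounded_linear (\<lambda>y::complex \<times> (complex^'n). (0::complex, snd y))"
  by (intro bounded_linear_Pair bounded_linear_zero bounded_linear_snd)

lemma fx_apply:
  assumes "x \<in> D"
  shows "blinfun_apply (fx x t) y =
     - Ln (1 - fst x / gam \<rho> t) * Dv \<alpha> (gam \<rho> t, snd x) (0, snd y)
     + \<alpha> (gam \<rho> t, snd x) / (gam \<rho> t - fst x) * fst y"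
proof -
  have "hat \<alpha> (gam \<rho> t, snd x)" using h\<alpha> gam_in assms by (cases x) auto
  then have "bounded_linear (Dv \<alpha> (gam \<rho> t, snd x))" by (rule Dv(3))
  then show ?thesis unfolding fx_def
    by (simp add: bounded_linear_Blinfun_apply bl_P2 blinfun.add_left bounded_linear_fst)
qed

lemma fx_cont: "continuous_on (D \<times> cbox 0 1) (\<lambda>(x, t). fx x t)"
proof -
  have c1: "continuous_on (D \<times> cbox 0 1) (\<lambda>(x,t). Blinfun (Dv \<alpha> (gam \<rho> t, snd x)))"
  proof -
    have "continuous_on (ball 0 R \<times> U) (\<lambda>x. Blinfun (Dv \<alpha> x))"
      using hat_deriv_cont[OF _ h\<alpha>] U by (simp add: open_Times)
    moreover have "continuous_on (D \<times> cbox 0 1) (\<lambda>(x,t). (gam \<rho> t, snd x))"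
      by (auto intro!: continuous_intros simp: split_beta)
    moreover have "(\<lambda>(x,t). (gam \<rho> t, snd x)) ` (D \<times> cbox 0 1) \<subseteq> ball 0 R \<times> U"
      using gam_in by auto
    ultimately show ?thesis
      using continuous_on_compose2 by (smt (verit) case_prod_beta' continuous_on_cong)
  qed
  have c2: "continuous_on (D \<times> cbox 0 1) (\<lambda>(x,t). \<alpha> (gam \<rho> t, snd x))"
  proof -
    have "continuous_on (D \<times> cbox 0 1) (\<lambda>(x,t). (gam \<rho> t, snd x))"
      by (auto intro!: continuous_intros simp: split_beta)
    moreover have "(\<lambda>(x,t). (gam \<rho> t, snd x)) ` (D \<times> cbox 0 1) \<subseteq> ball 0 R \<times> U"
      using gam_in by auto
    ultimately show ?thesis
      using continuous_on_compose2[OF cont_\<alpha>] by (smt (verit) case_prod_beta' continuous_on_cong)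
  qed
  have c3: "continuous_on (D \<times> cbox 0 1) (\<lambda>(x,t). Ln (1 - fst x / gam \<rho> t))"
    unfolding split_beta
    apply (intro continuous_intros)
    using \<rho> apply (auto simp: gam_def)[1]
    using one_minus_small q_small by auto
  have c4: "continuous_on (D \<times> cbox 0 1) (\<lambda>(x,t). \<alpha> (gam \<rho> t, snd x) / (gam \<rho> t - fst x))"
    unfolding split_beta
    apply (intro continuous_intros)
    using c2 apply (simp add: split_beta)
    using \<rho> by (auto simp: norm_gam dest!: arg_cong[of _ _ norm])
  show ?thesis unfolding fx_def split_beta
    apply (rule continuous_on_add)
    apply (rule bounded_bilinear.continuous_on[OF bounded_bilinear_blinfun_compose])
     apply (rule bounded_linear.continuous_on[OF bounded_linear_blinfun_mult_right])
     apply (rule continuous_on_minus) using c3 apply (simp add: split_beta)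
    apply (rule bounded_bilinear.continuous_on[OF bounded_bilinear_blinfun_compose])
    using c1 apply (simp add: split_beta)
    apply (rule continuous_on_const)
    apply (rule bounded_bilinear.continuous_on[OF bounded_bilinear_blinfun_compose])
     apply (rule bounded_linear.continuous_on[OF bounded_linear_blinfun_mult_right])
    using c4 apply (simp add: split_beta)
    apply (rule continuous_on_const)
    done
qed

lemma gam_nz: "gam \<rho> t \<noteq> 0"
proof
  assume "gam \<rho> t = 0"
  then have "norm (gam \<rho> t) = 0" by simp
  with norm_gam[of \<rho> t] \<rho> show False by simp
qed

lemma integrand_deriv:
  assumes x: "x \<in> D"
  shows "((\<lambda>x. - \<alpha> (gam \<rho> t, snd x) * Ln (1 - fst x / gam \<rho> t)) has_derivative blinfun_apply (fx x t)) (at x)"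
proof -
  let ?g = "gam \<rho> t"
  have ha: "hat \<alpha> (?g, snd x)" using h\<alpha> gam_in x by (cases x) auto
  have d1: "((\<lambda>x. (?g, snd x)) has_derivative (\<lambda>y. (0, snd y))) (at x)"
    by (auto intro!: derivative_eq_intros)
  have da: "((\<lambda>x. \<alpha> (?g, snd x)) has_derivative (\<lambda>y. Dv \<alpha> (?g, snd x) (0, snd y))) (at x)"
    using has_derivative_compose[OF d1 Dv(1)[OF ha]] by (simp add: o_def)
  have nn: "1 - fst x / ?g \<notin> \<real>\<^sub>\<le>\<^sub>0" using one_minus_small q_small x by blast
  have dq: "((\<lambda>x. 1 - fst x / ?g) has_derivative (\<lambda>y. - fst y / ?g)) (at x)"
    using gam_nz[of t] by (auto intro!: derivative_eq_intros simp: field_simps)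
  have dL: "((\<lambda>x. Ln (1 - fst x / ?g)) has_derivative (\<lambda>y. inverse (1 - fst x / ?g) * (- fst y / ?g))) (at x)"
    using has_derivative_compose[OF dq has_field_derivative_Ln[OF nn, unfolded has_field_derivative_def]]
    by (simp add: o_def)
  have "((\<lambda>x. - (\<alpha> (?g, snd x) * Ln (1 - fst x / ?g))) has_derivative
      (\<lambda>y. - (\<alpha> (?g, snd x) * (inverse (1 - fst x / ?g) * (- fst y / ?g)) +
             Dv \<alpha> (?g, snd x) (0, snd y) * Ln (1 - fst x / ?g)))) (at x)"
    by (intro has_derivative_minus has_derivative_mult da dL)
  moreover have "(\<lambda>y. - (\<alpha> (?g, snd x) * (inverse (1 - fst x / ?g) * (- fst y / ?g)) +
             Dv \<alpha> (?g, snd x) (0, snd y) * Ln (1 - fst x / ?g))) = blinfun_apply (fx x t)"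
  proof
    fix y :: "complex \<times> (complex ^ 'n)"
    have "?g - fst x \<noteq> 0" using q_small[OF x, of t] gam_nz[of t] by auto
    then have e: "inverse (1 - fst x / ?g) * (- fst y / ?g) = - (fst y / (?g - fst x))"
      using gam_nz by (simp add: field_simps)
    show "- (\<alpha> (?g, snd x) * (inverse (1 - fst x / ?g) * (- fst y / ?g)) +
             Dv \<alpha> (?g, snd x) (0, snd y) * Ln (1 - fst x / ?g)) = blinfun_apply (fx x t) y"
      unfolding fx_apply[OF x] e by (simp add: algebra_simps)
  qed
  ultimately show ?thesis by simp
qed

lemma B_deriv:
  assumes x: "x \<in> D"
  shows "(Bfun \<alpha> \<rho> has_derivative blinfun_apply (integral (cbox 0 1) (fx x))) (at x)"
proof -
  have cf: "continuous_on (D \<times> cbox 0 1) (\<lambda>(x,t). - \<alpha> (gam \<rho> t, snd x) * Ln (1 - fst x / gam \<rho> t))"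
  proof -
    have c2: "continuous_on (D \<times> cbox 0 1) (\<lambda>(x,t). \<alpha> (gam \<rho> t, snd x))"
    proof -
      have "continuous_on (D \<times> cbox 0 1) (\<lambda>(x,t). (gam \<rho> t, snd x))"
        by (auto intro!: continuous_intros simp: split_beta)
      moreover have "(\<lambda>(x,t). (gam \<rho> t, snd x)) ` (D \<times> cbox 0 1) \<subseteq> ball 0 R \<times> U"
        using gam_in by auto
      ultimately show ?thesis
        using continuous_on_compose2[OF cont_\<alpha>] by (smt (verit) case_prod_beta' continuous_on_cong)
    qed
    have c3: "continuous_on (D \<times> cbox 0 1) (\<lambda>(x,t). Ln (1 - fst x / gam \<rho> t))"
      unfolding split_beta
      apply (intro continuous_intros)
      using \<rho> apply (auto simp: gam_def)[1]
      using one_minus_small q_small by auto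
    show ?thesis using continuous_on_mult[OF continuous_on_minus[OF c2] c3] by (simp add: split_beta)
  qed
  have int: "(\<lambda>t. - \<alpha> (gam \<rho> t, snd x') * Ln (1 - fst x' / gam \<rho> t)) integrable_on cbox 0 1"
    if "x' \<in> D" for x'
  proof (rule integrable_continuous)
    show "continuous_on (cbox 0 1) (\<lambda>t. - \<alpha> (gam \<rho> t, snd x') * Ln (1 - fst x' / gam \<rho> t))"
    proof -
      have "(\<lambda>t. (x', t)) ` cbox 0 1 \<subseteq> D \<times> cbox 0 1" using that by auto
      from continuous_on_compose2[OF cf continuous_on_Pair[OF continuous_on_const continuous_on_id] this]
      show ?thesis by simp
    qed
  qed
  have "((\<lambda>x. integral (cbox 0 1) (\<lambda>t. - \<alpha> (gam \<rho> t, snd x) * Ln (1 - fst x / gam \<rho> t)))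
      has_derivative integral (cbox 0 1) (fx x)) (at x within D)"
    apply (rule leibniz_rule[where fx=fx])
    using integrand_deriv has_derivative_at_withinI apply blast
    using int apply blast
    using fx_cont apply blast
    using x apply blast
    by (rule convex_D)
  then have "((\<lambda>x. integral (cbox 0 1) (\<lambda>t. - \<alpha> (gam \<rho> t, snd x) * Ln (1 - fst x / gam \<rho> t)))
      has_derivative integral (cbox 0 1) (fx x)) (at x)"
    using at_within_open[OF x open_D] by simp
  then show ?thesis unfolding Bfun_def[abs_def] by simp
qed

lemma fx_integrable: "x \<in> D \<Longrightarrow> fx x integrable_on cbox 0 1"
proof (rule integrable_continuous)
  assume "x \<in> D"
  then have "(\<lambda>t. (x, t)) ` cbox 0 1 \<subseteq> D \<times> cbox 0 1" by auto
  from continuous_on_compose2[OF fx_cont continuous_on_Pair[OF continuous_on_const continuous_on_id] this]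
  show "continuous_on (cbox 0 1) (fx x)" by simp
qed

lemma hat_B: "x \<in> D \<Longrightarrow> hat (Bfun \<alpha> \<rho>) x"
  unfolding hat_def
proof (intro exI conjI)
  assume x: "x \<in> D"
  show "(Bfun \<alpha> \<rho> has_derivative blinfun_apply (integral (cbox 0 1) (fx x))) (at x)"
    by (rule B_deriv[OF x])
  show "clin (blinfun_apply (integral (cbox 0 1) (fx x)))"
    unfolding clin_def
  proof (intro allI)
    fix c :: complex and y :: "complex \<times> (complex ^ 'n)"
    have e: "blinfun_apply (fx x t) (csmul c y) = c * blinfun_apply (fx x t) y" for t
    proof -
      have ha: "hat \<alpha> (gam \<rho> t, snd x)" using h\<alpha> gam_in x by (cases x) auto
      have "Dv \<alpha> (gam \<rho> t, snd x) (0, csmul c (snd y)) = c * Dv \<alpha> (gam \<rho> t, snd x) (0, snd y)"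
        using Dv(2)[OF ha] unfolding clin_def by (metis csmul_complex_eq csmul_prod_eq mult_zero_right)
      then show ?thesis unfolding fx_apply[OF x] by (simp add: csmul_prod_def algebra_simps)
    qed
    show "blinfun_apply (integral (cbox 0 1) (fx x)) (csmul c y) =
          csmul c (blinfun_apply (integral (cbox 0 1) (fx x)) y)"
      unfolding blinfun_apply_integral[OF fx_integrable[OF x]] e
      by (simp add: integral_mult_right)
  qed
qed

lemma B_wderiv_int:
  assumes x: "(w, u) \<in> D"
  shows "((\<lambda>w. Bfun \<alpha> \<rho> (w, u)) has_field_derivative
          integral {0..1} (\<lambda>t. \<alpha> (gam \<rho> t, u) / (gam \<rho> t - w))) (at w)"
proof -
  have d: "((\<lambda>w. (w, u)) has_derivative (\<lambda>t. (t, 0))) (at w)"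
    by (auto intro!: derivative_eq_intros)
  have "((\<lambda>w. Bfun \<alpha> \<rho> (w, u)) has_derivative
      (\<lambda>t. blinfun_apply (integral (cbox 0 1) (fx (w,u))) (t, 0))) (at w)"
    using has_derivative_compose[OF d B_deriv[OF x]] by (simp add: o_def)
  moreover have "blinfun_apply (integral (cbox 0 1) (fx (w,u))) (t, 0) =
      integral {0..1} (\<lambda>t. \<alpha> (gam \<rho> t, u) / (gam \<rho> t - w)) * t" for t
  proof -
    have z: "Dv \<alpha> (gam \<rho> s, u) (0, 0) = 0" for s
    proof -
      have ha: "hat \<alpha> (gam \<rho> s, u)" using h\<alpha> gam_in x by auto
      show ?thesis using linear_0[OF bounded_linear.linear[OF Dv(3)[OF ha]]] by (simp add: zero_prod_def)
    qed
    show ?thesis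
      unfolding blinfun_apply_integral[OF fx_integrable[OF x]] fx_apply[OF x]
      using integral_mult_left[of "{0..1}" "\<lambda>y. \<alpha> (gam \<rho> y, u) / (gam \<rho> y - w)" t]
      by (simp add: z)
  qed
  ultimately show ?thesis unfolding has_field_derivative_def
    by (simp add: mult.commute[of _ t] mult.commute[of t])
qed

lemma B_wderiv:
  assumes x: "(w, u) \<in> D" and w0: "w \<noteq> 0"
  shows "((\<lambda>w. Bfun \<alpha> \<rho> (w, u)) has_field_derivative (\<alpha> (w, u) - \<alpha> (0, u)) / w) (at w)"
proof -
  have u: "u \<in> ball 0 \<delta>" and wr: "norm w < \<rho>" using x by auto
  define a where "a = (\<lambda>\<zeta>. \<alpha> (\<zeta>, u))"
  have hol: "a holomorphic_on ball 0 R"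
    unfolding holomorphic_on_def field_differentiable_def a_def
  proof
    fix z assume "z \<in> ball (0::complex) R"
    then have "hat \<alpha> (z, u)" using h\<alpha> u \<delta> by auto
    from hat_slice1[OF this] show "\<exists>f'. ((\<lambda>\<zeta>. \<alpha> (\<zeta>, u)) has_field_derivative f') (at z within ball 0 R)"
      using has_field_derivative_at_within by blast
  qed
  have holr: "a holomorphic_on ball 0 \<rho>" using holomorphic_on_subset[OF hol, of "ball 0 \<rho>"] \<rho> by (simp add: subset_ball)
  have contr: "continuous_on (cball 0 \<rho>) a"
    using continuous_on_subset[OF holomorphic_on_imp_continuous_on[OF hol], of "cball 0 \<rho>"] \<rho>
    by (simp add: cball_subset_ball_iff)
  have C1: "((\<lambda>\<zeta>. a \<zeta> / (\<zeta> - w)) has_contour_integral (2 * of_real pi * \<i> * a w)) (circlepath 0 \<rho>)"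
    by (rule Cauchy_integral_circlepath[OF contr holr]) (use wr in simp)
  have C2: "((\<lambda>\<zeta>. a \<zeta> / (\<zeta> - 0)) has_contour_integral (2 * of_real pi * \<i> * a 0)) (circlepath 0 \<rho>)"
    by (rule Cauchy_integral_circlepath[OF contr holr]) (use \<rho> in simp)
  have C: "((\<lambda>\<zeta>. (a \<zeta> / (\<zeta> - w) - a \<zeta> / (\<zeta> - 0)) / w) has_contour_integral
        ((2 * of_real pi * \<i> * a w - 2 * of_real pi * \<i> * a 0) / w)) (circlepath 0 \<rho>)"
    by (intro has_contour_integral_div has_contour_integral_diff C1 C2)
  then have I: "((\<lambda>t. (a (gam \<rho> t) / (gam \<rho> t - w) - a (gam \<rho> t) / (gam \<rho> t - 0)) / w *
        (2 * pi * \<i> * \<rho> * exp (2 * of_real pi * \<i> * t))) has_integral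
        ((2 * of_real pi * \<i> * a w - 2 * of_real pi * \<i> * a 0) / w)) {0..1}"
    unfolding has_contour_integral_def
    by (rule has_integral_eq[rotated]) (simp add: vector_derivative_circlepath01 gam_circlepath)
  have eqi: "(a (gam \<rho> t) / (gam \<rho> t - w) - a (gam \<rho> t) / (gam \<rho> t - 0)) / w *
        (2 * pi * \<i> * \<rho> * exp (2 * of_real pi * \<i> * t)) =
        (2 * of_real pi * \<i>) * (\<alpha> (gam \<rho> t, u) / (gam \<rho> t - w))" for t
  proof -
    have g: "gam \<rho> t \<noteq> 0" by (rule gam_nz)
    have gw: "gam \<rho> t - w \<noteq> 0"
    proof
      assume "gam \<rho> t - w = 0"
      then have "norm (gam \<rho> t) = norm w" by simp
      with wr \<rho> show False by simp
    qed
    have e: "2 * pi * \<i> * \<rho> * exp (2 * of_real pi * \<i> * t) = 2 * of_real pi * \<i> * gam \<rho> t"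
      by (simp add: gam_def)
    show ?thesis unfolding e a_def using g gw w0 by (simp add: field_simps)
  qed
  have "((\<lambda>t. (2 * of_real pi * \<i>) * (\<alpha> (gam \<rho> t, u) / (gam \<rho> t - w))) has_integral
        ((2 * of_real pi * \<i> * a w - 2 * of_real pi * \<i> * a 0) / w)) {0..1}"
    using I eqi by simp
  from has_integral_mult_right[OF this, of "inverse (2 * of_real pi * \<i>)"]
  moreover have "(\<i> * (complex_of_real pi * (2 * \<alpha> (w, u))) -
       \<i> * (complex_of_real pi * (2 * \<alpha> (0, u)))) /
      (\<i> * (w * (complex_of_real pi * 2))) = (\<alpha> (w, u) - \<alpha> (0, u)) / w"
    using w0 by (simp add: field_simps)
  ultimately have "((\<lambda>t. \<alpha> (gam \<rho> t, u) / (gam \<rho> t - w)) has_integral (\<alpha> (w, u) - \<alpha> (0, u)) / w) {0..1}"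
    by (simp add: a_def field_simps)
  then have "integral {0..1} (\<lambda>t. \<alpha> (gam \<rho> t, u) / (gam \<rho> t - w)) = (\<alpha> (w, u) - \<alpha> (0, u)) / w"
    by (rule integral_unique)
  then show ?thesis using B_wderiv_int[OF x] by simp
qed

lemma B_zero: "(\<forall>z\<in>ball 0 R. \<alpha> (z, 0) = 0) \<Longrightarrow> Bfun \<alpha> \<rho> (w, 0) = 0"
  unfolding Bfun_def using \<rho> by simp

end


definition Qf :: "(complex \<times> 'v \<Rightarrow> complex) \<Rightarrow> real \<Rightarrow> nat \<Rightarrow> complex \<times> 'v \<Rightarrow> complex" where
  "Qf \<alpha> \<rho> k x = fst x ^ (k+1) / of_nat (k+1) + Bfun \<alpha> \<rho> x"

definition cf :: "(complex \<times> 'v \<Rightarrow> complex) \<Rightarrow> real \<Rightarrow> nat \<Rightarrow> ('v \<Rightarrow> complex) \<Rightarrow> complex \<Rightarrow> complex \<Rightarrow> 'v \<Rightarrow> complex" where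
  "cf \<alpha> \<rho> k \<sigma> \<theta> p u = Qf \<alpha> \<rho> k (\<sigma> u, u) - p ^ (k+1) / of_nat (k+1) + \<alpha> (0, u) * Ln (\<sigma> u / (\<theta> * p))"

lemma hat_fst_comp: "hat f x \<Longrightarrow> hat (\<lambda>x. fst (f x)) x"
  using hat_compose[OF _ hat_fst] by blast
lemma hat_snd_comp: "hat f x \<Longrightarrow> hat (\<lambda>x. snd (f x)) x"
  using hat_compose[OF _ hat_snd] by blast

lemma hat_power:
  fixes f :: "'a::csc \<Rightarrow> complex"
  shows "hat f x \<Longrightarrow> hat (\<lambda>x. f x ^ m) x"
  by (rule hat_field[where g="\<lambda>w. w ^ m"]) (auto intro!: derivative_eq_intros)

lemma hat_div_const:
  fixes f :: "'a::csc \<Rightarrow> complex"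
  shows "hat f x \<Longrightarrow> hat (\<lambda>x. f x / c) x"
  using hat_mult[OF _ hat_const, of f x "inverse c"] by (simp add: divide_inverse)

lemma hat_Ln:
  fixes f :: "'a::csc \<Rightarrow> complex"
  shows "hat f x \<Longrightarrow> f x \<notin> \<real>\<^sub>\<le>\<^sub>0 \<Longrightarrow> hat (\<lambda>x. Ln (f x)) x"
  by (rule hat_field[OF has_field_derivative_Ln])

context Bsetup
begin

lemma hat_Q: "x \<in> D \<Longrightarrow> hat (Qf \<alpha> \<rho> k) x"
proof -
  assume x: "x \<in> D"
  have "hat (\<lambda>x. fst x ^ (k+1) / of_nat (k+1) + Bfun \<alpha> \<rho> x) x"
    by (intro hat_add hat_div_const hat_power hat_fst hat_B x)
  then show ?thesis unfolding Qf_def[abs_def] .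
qed

lemma Q_wderiv:
  assumes x: "(w, u) \<in> D" and w0: "w \<noteq> 0"
  shows "((\<lambda>w. Qf \<alpha> \<rho> k (w, u)) has_field_derivative w ^ k + (\<alpha> (w, u) - \<alpha> (0, u)) / w) (at w)"
proof -
  have "((\<lambda>w. w ^ (k+1) / of_nat (k+1) + Bfun \<alpha> \<rho> (w, u)) has_field_derivative
      (of_nat (k+1) * w ^ k / of_nat (k+1) + (\<alpha> (w, u) - \<alpha> (0, u)) / w)) (at w)"
    by (intro DERIV_add DERIV_cdivide B_wderiv[OF x w0]) (use DERIV_power[OF DERIV_ident, where n="k+1"] in simp)
  moreover have "of_nat (k+1) * w ^ k / of_nat (k+1) = w ^ k"
    by (simp del: of_nat_Suc)
  ultimately show ?thesis unfolding Qf_def by simp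
qed

lemma hat_a: "u \<in> ball 0 \<delta> \<Longrightarrow> hat (\<lambda>u. \<alpha> (0, u)) u"
proof -
  assume u: "u \<in> ball 0 \<delta>"
  have "hat \<alpha> (0, u)" using h\<alpha> u \<delta> \<rho> by auto
  then show ?thesis using hat_compose[OF hat_pair[OF hat_const hat_ident]] by blast
qed

lemma cont_B: "continuous_on D (Bfun \<alpha> \<rho>)"
  using hat_B hat_imp_continuous continuous_at_imp_continuous_on by blast

lemma hat_c:
  assumes u: "u \<in> ball 0 \<delta>" and hs: "hat \<sigma> u" and s1: "norm (\<sigma> u) < \<rho>"
    and s2: "norm (\<sigma> u / (\<theta> * p) - 1) < 1"
  shows "hat (cf \<alpha> \<rho> k \<sigma> \<theta> p) u"
proof -
  have hQ: "hat (Qf \<alpha> \<rho> k) (\<sigma> u, u)" using hat_Q s1 u by auto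
  have nn: "\<sigma> u / (\<theta> * p) \<notin> \<real>\<^sub>\<le>\<^sub>0"
    using one_minus_small[of "1 - \<sigma> u / (\<theta> * p)"] s2 by (simp add: norm_minus_commute)
  have "hat (\<lambda>u. Qf \<alpha> \<rho> k (\<sigma> u, u) - p ^ (k+1) / of_nat (k+1) + \<alpha> (0, u) * Ln (\<sigma> u / (\<theta> * p))) u"
    apply (intro hat_add hat_minus hat_mult hat_const hat_a[OF u] hat_Ln hat_div_const hs nn)
    apply (rule hat_compose[OF hat_pair[OF hs hat_ident]])
    using hQ by simp
  then show ?thesis unfolding cf_def[abs_def] .
qed

end


locale Msetup = Bsetup +
  fixes k :: nat and R1 R2 :: real and \<sigma> :: "complex ^ 'a \<Rightarrow> complex" and \<theta> p :: complex
    and r \<delta>1 :: real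
  assumes R1: "0 < R1" "R1 < R2" "R2 < \<rho>"
  and \<alpha>0: "\<forall>z\<in>ball 0 R. \<alpha> (z,0) = 0"
  and p: "R1 < norm p" "norm p < R2"
  and h\<sigma>: "\<forall>u\<in>U. hat \<sigma> u"
  and \<sigma>0: "\<sigma> 0 = \<theta> * p"
  and \<theta>: "\<theta>^(k+1) = 1" "norm \<theta> = 1"
  and r: "0 < r" "r \<le> 1/4" "R2*(1+r) < \<rho>" "\<forall>h::complex. norm h \<le> r \<longrightarrow> norm ((1+h)^k - 1) \<le> 1/4"
  and \<delta>1: "0 < \<delta>1" "\<delta>1 \<le> \<delta>"
  and E2: "\<forall>w u. norm w \<le> R2*(1+r) \<longrightarrow> norm u < \<delta>1 \<longrightarrow> norm (\<alpha> (w,u)) \<le> R1^(k+1)/32"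
  and E3: "\<forall>w u. norm w \<le> R2*(1+r) \<longrightarrow> norm u < \<delta>1 \<longrightarrow> norm (Bfun \<alpha> \<rho> (w,u)) \<le> r*R1^(k+1)/8"
  and E4: "\<forall>u. norm u < \<delta>1 \<longrightarrow> norm (cf \<alpha> \<rho> k \<sigma> \<theta> p u) \<le> r*R1^(k+1)/8"
  and E5: "\<forall>u. norm u < \<delta>1 \<longrightarrow> norm (\<sigma> u/(\<theta>*p) - 1) \<le> r"
begin

definition "A = {z::complex. R1 < norm z \<and> norm z < R2}"
definition "U0 = ball (0::complex^'a) \<delta>1"

definition c where "c u = cf \<alpha> \<rho> k \<sigma> \<theta> p u"
definition F where "F z u h = Qf \<alpha> \<rho> k (\<theta>*z*(1+h), u) - z^(k+1)/of_nat (k+1) + \<alpha> (0,u) * Ln (1+h) - c u"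
definition Fd where "Fd z u h = z^(k+1)*(1+h)^k + \<alpha> (\<theta>*z*(1+h), u) / (1+h)"
definition T where "T z u h = h - F z u h / z^(k+1)"

lemma alg2: "(q::complex) \<noteq> 0 \<Longrightarrow> Z \<noteq> 0 \<Longrightarrow> 1 - (Z*q^k + a/q)/Z = -(q^k - 1) - a/(q*Z)"
  by (simp add: field_simps)

lemma alg1: "(t::complex) \<noteq> 0 \<Longrightarrow> z \<noteq> 0 \<Longrightarrow> q \<noteq> 0 \<Longrightarrow>
   (A1 - A0) / (t*z*q) * (t*z) + A0 * inverse q = A1 / q"
  by (simp add: field_simps)

lemma zA: "z \<in> A \<Longrightarrow> z \<noteq> 0 \<and> R1 < norm z \<and> norm z < R2"
  using R1 by (auto simp: A_def)

lemma h_small: "norm (h::complex) \<le> r \<Longrightarrow> norm (1+h) \<ge> 3/4 \<and> norm (1+h) \<le> 1 + r \<and> 1 + h \<noteq> 0 \<and> norm h < 1"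
proof -
  assume h: "norm h \<le> r"
  have "norm (1::complex) \<le> norm (1+h) + norm h" using norm_triangle_ineq4[of "1+h" h] by simp
  then have a: "norm (1+h) \<ge> 3/4" using h r by simp
  have "norm (1+h) \<le> 1 + r" using norm_triangle_ineq[of 1 h] h by simp
  with a show ?thesis using h r by auto
qed

lemma w_bound:
  assumes z: "z \<in> A" and h: "norm h \<le> r"
  shows "norm (\<theta>*z*(1+h)) \<le> R2*(1+r)" "norm (\<theta>*z*(1+h)) \<ge> R1 * (3/4)" "\<theta>*z*(1+h) \<noteq> 0"
proof -
  have nz: "norm (\<theta>*z*(1+h)) = norm z * norm (1+h)" using \<theta> by (simp add: norm_mult)
  show "norm (\<theta>*z*(1+h)) \<le> R2*(1+r)" unfolding nz
    using zA[OF z] h_small[OF h] R1 r by (intro mult_mono) auto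
  show "norm (\<theta>*z*(1+h)) \<ge> R1 * (3/4)" unfolding nz
    using zA[OF z] h_small[OF h] R1 r by (intro mult_mono) auto
  then show "\<theta>*z*(1+h) \<noteq> 0" using R1 by auto
qed

lemma wD: "z \<in> A \<Longrightarrow> norm h \<le> r \<Longrightarrow> u \<in> U0 \<Longrightarrow> (\<theta>*z*(1+h), u) \<in> D"
  using w_bound(1)[of z h] r \<delta>1 by (auto simp: U0_def)

lemma F_hderiv:
  assumes z: "z \<in> A" and u: "u \<in> U0" and h: "norm h \<le> r"
  shows "((\<lambda>h. F z u h) has_field_derivative Fd z u h) (at h)"
proof -
  let ?w = "\<theta>*z*(1+h)"
  have w0: "?w \<noteq> 0" using w_bound[OF z h] by simp
  have dQ: "((\<lambda>h. Qf \<alpha> \<rho> k (\<theta>*z*(1+h), u)) has_field_derivative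
      (?w ^ k + (\<alpha> (?w, u) - \<alpha> (0, u)) / ?w) * (\<theta>*z)) (at h)"
  proof -
    have dQ0: "((\<lambda>w. Qf \<alpha> \<rho> k (w,u)) has_field_derivative (?w ^ k + (\<alpha> (?w, u) - \<alpha> (0, u)) / ?w)) (at ?w)"
      by (rule Q_wderiv[OF wD[OF z h u] w0])
    have dg: "((\<lambda>h. \<theta>*z*(1+h)) has_field_derivative \<theta>*z) (at h)"
      by (auto intro!: derivative_eq_intros)
    show ?thesis using DERIV_chain2[OF dQ0 dg] by simp
  qed
  have nn: "1 + h \<notin> \<real>\<^sub>\<le>\<^sub>0" using one_minus_small[of "-h"] h_small[OF h] by simp
  have dL: "((\<lambda>h. Ln (1+h)) has_field_derivative inverse (1+h) * 1) (at h)"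
  proof -
    have dg: "((\<lambda>h. 1+h) has_field_derivative 1) (at h)"
      by (auto intro!: derivative_eq_intros)
    show ?thesis using DERIV_chain2[OF has_field_derivative_Ln[OF nn] dg] by simp
  qed
  have "((\<lambda>h. F z u h) has_field_derivative
      ((?w ^ k + (\<alpha> (?w, u) - \<alpha> (0, u)) / ?w) * (\<theta>*z) - 0 + \<alpha> (0,u) * (inverse (1+h) * 1) - 0)) (at h)"
    unfolding F_def by (intro DERIV_diff DERIV_add DERIV_cmult dQ dL DERIV_const)
  moreover have "(?w ^ k + (\<alpha> (?w, u) - \<alpha> (0, u)) / ?w) * (\<theta>*z) - 0 + \<alpha> (0,u) * (inverse (1+h) * 1) - 0
      = Fd z u h"
  proof -
    obtain w where w: "w = ?w" by blast
    have "?w ^ k * (\<theta>*z) = \<theta>^(k+1) * z^(k+1) * (1+h)^k"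
      by (simp only: power_mult_distrib power_Suc Suc_eq_plus1[symmetric]) (simp add: algebra_simps)
    also have "\<dots> = z^(k+1) * (1+h)^k" using \<theta> by simp
    finally have e1: "w ^ k * (\<theta>*z) = z^(k+1) * (1+h)^k" using w by simp
    have hz: "1 + h \<noteq> 0" using h_small[OF h] by simp
    have tz: "\<theta> \<noteq> 0" "z \<noteq> 0" using \<theta> zA[OF z] by auto
    have e2: "(\<alpha> (w, u) - \<alpha> (0, u)) / w * (\<theta>*z) + \<alpha> (0,u) * inverse (1+h) = \<alpha> (w, u) / (1+h)"
      using alg1[OF tz hz] w by simp
    have "(w ^ k + (\<alpha> (w, u) - \<alpha> (0, u)) / w) * (\<theta>*z) - 0 + \<alpha> (0,u) * (inverse (1+h) * 1) - 0
        = w ^ k * (\<theta>*z) + ((\<alpha> (w, u) - \<alpha> (0, u)) / w * (\<theta>*z) + \<alpha> (0,u) * inverse (1+h))"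
      by (simp add: algebra_simps)
    also have "\<dots> = Fd z u h" unfolding Fd_def w[symmetric] e1 e2 ..
    finally show ?thesis using w by simp
  qed
  ultimately show ?thesis by simp
qed

lemma zpow:
  assumes z: "z \<in> A"
  shows "norm (z^(k+1)) \<ge> R1^(k+1)" "z^(k+1) \<noteq> 0" "R1^(k+1) > 0"
proof -
  show "norm (z^(k+1)) \<ge> R1^(k+1)" unfolding norm_power
    using zA[OF z] R1 by (intro power_mono) auto
  show "z^(k+1) \<noteq> 0" using zA[OF z] by simp
  show "R1^(k+1) > 0" using R1 by simp
qed

lemma Fd_bound:
  assumes z: "z \<in> A" and u: "u \<in> U0" and h: "norm h \<le> r"
  shows "norm (1 - Fd z u h / z^(k+1)) \<le> 1/2"
proof -
  let ?w = "\<theta>*z*(1+h)"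
  have hz: "1 + h \<noteq> 0" "norm (1+h) \<ge> 3/4" using h_small[OF h] by auto
  have zk: "z^(k+1) \<noteq> 0" using zpow[OF z] by simp
  have eq: "1 - Fd z u h / z^(k+1) = - ((1+h)^k - 1) - \<alpha> (?w, u) / ((1+h) * z^(k+1))"
    unfolding Fd_def using alg2[OF hz(1) zk] .
  have aw: "norm (\<alpha> (?w, u)) \<le> R1^(k+1)/32"
    using E2 w_bound(1)[OF z h] u by (auto simp: U0_def)
  have den: "norm ((1+h) * z^(k+1)) \<ge> 3/4 * R1^(k+1)"
    unfolding norm_mult using hz zpow[OF z] by (intro mult_mono) auto
  have "norm (\<alpha> (?w, u) / ((1+h) * z^(k+1))) \<le> (R1^(k+1)/32) / (3/4 * R1^(k+1))"
    unfolding norm_divide using aw den zpow[OF z] by (intro frac_le) auto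
  also have "\<dots> = 1/24" using zpow(3)[OF z] R1 by (simp add: field_simps)
  finally have t2: "norm (\<alpha> (?w, u) / ((1+h) * z^(k+1))) \<le> 1/24" .
  have t1: "norm ((1+h)^k - 1) \<le> 1/4" using r(4) h by blast
  have "norm (1 - Fd z u h / z^(k+1)) \<le> norm ((1+h)^k - 1) + norm (\<alpha> (?w, u) / ((1+h) * z^(k+1)))"
    unfolding eq by (metis norm_minus_cancel norm_triangle_ineq4)
  then show ?thesis using t1 t2 by simp
qed

lemma T_deriv:
  assumes z: "z \<in> A" and u: "u \<in> U0" and h: "norm h \<le> r"
  shows "((\<lambda>h. T z u h) has_field_derivative (1 - Fd z u h / z^(k+1))) (at h)"
  unfolding T_def by (intro DERIV_diff DERIV_ident DERIV_cdivide F_hderiv z u h)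

lemma T_lip:
  assumes z: "z \<in> A" and u: "u \<in> U0" and h1: "norm h1 \<le> r" and h2: "norm h2 \<le> r"
  shows "norm (T z u h1 - T z u h2) \<le> 1/2 * norm (h1 - h2)"
proof (rule field_differentiable_bound[where S="cball 0 r"])
  show "convex (cball (0::complex) r)" by simp
  show "\<And>h. h \<in> cball 0 r \<Longrightarrow> ((\<lambda>h. T z u h) has_field_derivative (1 - Fd z u h / z^(k+1))) (at h within cball 0 r)"
    using T_deriv[OF z u] by (auto intro: has_field_derivative_at_within)
  show "\<And>h. h \<in> cball 0 r \<Longrightarrow> norm (1 - Fd z u h / z^(k+1)) \<le> 1/2"
    using Fd_bound[OF z u] by auto
qed (use h1 h2 in auto)

lemma F0: "z \<in> A \<Longrightarrow> F z u 0 = Bfun \<alpha> \<rho> (\<theta>*z, u) - c u"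
proof -
  assume z: "z \<in> A"
  have e: "(\<theta>*z)^(k+1) = z^(k+1)" by (metis \<theta>(1) mult_1 power_mult_distrib)
  have "F z u 0 = (\<theta>*z)^(k+1)/of_nat(k+1) + Bfun \<alpha> \<rho> (\<theta>*z,u) - z^(k+1)/of_nat(k+1) + \<alpha> (0,u)*Ln 1 - c u"
    by (simp only: F_def Qf_def fst_conv add_0_right mult_1_right)
  then show ?thesis unfolding e by simp
qed

lemma T0:
  assumes z: "z \<in> A" and u: "u \<in> U0"
  shows "norm (T z u 0) \<le> r/4"
proof -
  have zw: "norm (\<theta>*z) \<le> R2*(1+r)"
    using w_bound(1)[OF z, of 0] r by simp
  have "norm (F z u 0) \<le> r*R1^(k+1)/8 + r*R1^(k+1)/8"
    unfolding F0[OF z] using E3 E4 zw u norm_triangle_ineq4 unfolding U0_def c_def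
    by (smt (verit, best) mem_ball_0)
  then have b: "norm (F z u 0) \<le> r*R1^(k+1)/4" by (simp add: algebra_simps)
  have "norm (T z u 0) = norm (F z u 0) / norm (z^(k+1))" unfolding T_def by (simp add: norm_divide)
  also have "\<dots> \<le> (r*R1^(k+1)/4) / R1^(k+1)"
    using b zpow[OF z] r by (intro frac_le) auto
  also have "\<dots> = r/4" using zpow(3)[OF z] R1 by simp
  finally show ?thesis .
qed

lemma T_maps:
  assumes z: "z \<in> A" and u: "u \<in> U0" and h: "norm h \<le> r"
  shows "norm (T z u h) \<le> 3/4 * r"
proof -
  have "norm (T z u h) \<le> norm (T z u h - T z u 0) + norm (T z u 0)"
    using norm_triangle_ineq2[of "T z u h" "T z u 0"] by simp
  also have "\<dots> \<le> 1/2 * norm (h - 0) + r/4"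
    using T_lip[OF z u h, of 0] T0[OF z u] r by (intro add_mono) auto
  finally show ?thesis using h by simp
qed

lemma FT: "z \<in> A \<Longrightarrow> (T z u h = h) \<longleftrightarrow> F z u h = 0"
  using zpow(2) unfolding T_def by auto

lemma F_ex1:
  assumes z: "z \<in> A" and u: "u \<in> U0"
  shows "\<exists>!h. h \<in> cball 0 r \<and> F z u h = 0"
proof -
  have "\<exists>!h\<in>cball 0 r. T z u h = h"
  proof (rule Banach_fix[where c="1/2"])
    show "complete (cball (0::complex) r)" by (simp add: complete_eq_closed)
    show "cball (0::complex) r \<noteq> {}" using r by simp
    show "T z u ` cball 0 r \<subseteq> cball 0 r"
    proof clarsimp
      fix h :: complex assume "norm h \<le> r"
      then show "norm (T z u h) \<le> r" using T_maps[OF z u, of h] r(1) by linarith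
    qed
    show "dist (T z u x) (T z u y) \<le> 1/2 * dist x y" if "x \<in> cball 0 r" "y \<in> cball 0 r" for x y
      using T_lip[OF z u, of x y] that by (simp add: dist_norm)
  qed auto
  then show ?thesis using FT[OF z] by auto
qed

definition hf where "hf z u = (THE h. h \<in> cball 0 r \<and> F z u h = 0)"

lemma hf:
  assumes z: "z \<in> A" and u: "u \<in> U0"
  shows "hf z u \<in> cball 0 r" "F z u (hf z u) = 0" "norm (hf z u) \<le> 3/4 * r"
    "\<And>h. h \<in> cball 0 r \<Longrightarrow> F z u h = 0 \<Longrightarrow> hf z u = h"
proof -
  have "hf z u \<in> cball 0 r \<and> F z u (hf z u) = 0"
    unfolding hf_def by (rule theI'[OF F_ex1[OF z u]])
  then show a: "hf z u \<in> cball 0 r" "F z u (hf z u) = 0" by auto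
  show "\<And>h. h \<in> cball 0 r \<Longrightarrow> F z u h = 0 \<Longrightarrow> hf z u = h"
    using F_ex1[OF z u] a by blast
  have "T z u (hf z u) = hf z u" using a FT[OF z] by blast
  then show "norm (hf z u) \<le> 3/4 * r" using T_maps[OF z u, of "hf z u"] a by simp
qed

lemma F_inj:
  assumes z: "z \<in> A" and u: "u \<in> U0" and h1: "norm h1 \<le> r" and h2: "norm h2 \<le> r"
    and eq: "F z u h1 = F z u h2"
  shows "h1 = h2"
proof -
  have "T z u h1 - T z u h2 = h1 - h2" unfolding T_def eq by simp
  then have "norm (h1 - h2) \<le> 1/2 * norm (h1 - h2)" using T_lip[OF z u h1 h2] by simp
  then show ?thesis by simp
qed

lemma U0_sub: "u \<in> U0 \<Longrightarrow> u \<in> ball 0 \<delta> \<and> u \<in> U"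
  using \<delta>1 \<delta> by (auto simp: U0_def)

lemma sig_props:
  assumes u: "u \<in> U0"
  shows "norm (\<sigma> u / (\<theta>*p) - 1) \<le> r" "norm (\<sigma> u) < \<rho>" "\<sigma> u = \<theta>*p*(1 + (\<sigma> u / (\<theta>*p) - 1))"
    "norm (\<sigma> u / (\<theta>*p) - 1) < 1"
proof -
  show a: "norm (\<sigma> u / (\<theta>*p) - 1) \<le> r" using E5 u by (auto simp: U0_def)
  then show "norm (\<sigma> u / (\<theta>*p) - 1) < 1" using r by simp
  have tp: "\<theta>*p \<noteq> 0" using \<theta> p R1 by auto
  then show e: "\<sigma> u = \<theta>*p*(1 + (\<sigma> u / (\<theta>*p) - 1))" by simp
  have "norm (\<sigma> u) = norm (\<theta>*p*(1 + (\<sigma> u / (\<theta>*p) - 1)))" using e by metis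
  also have "\<dots> = norm p * norm (1 + (\<sigma> u / (\<theta>*p) - 1))"
    by (simp only: norm_mult \<theta>(2) mult_1)
  also have "\<dots> \<le> R2 * (1 + r)"
    using h_small[OF a] p R1 by (intro mult_mono) auto
  finally show "norm (\<sigma> u) < \<rho>" using r by simp
qed

definition "S = A \<times> (U0 \<times> ball (0::complex) r)"

definition F3 where "F3 x = F (fst x) (fst (snd x)) (snd (snd x))"

lemma open_A: "open A"
proof -
  have "A = norm -` {R1<..<R2}" by (auto simp: A_def)
  then show ?thesis by (metis continuous_on_norm_id open_greaterThanLessThan open_vimage)
qed

lemma open_S: "open S"
  unfolding S_def U0_def by (intro open_Times open_A open_ball)

lemma hat_F3:
  assumes x: "x \<in> S"
  shows "hat F3 x"
proof -
  obtain z u h where xe: "x = (z,(u,h))" and z: "z \<in> A" and u: "u \<in> U0" and h: "norm h < r"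
    using x by (auto simp: S_def)
  have h': "norm h \<le> r" using h by simp
  have hw: "hat (\<lambda>x. (\<theta>*fst x*(1+snd (snd x)), fst (snd x))) x"
    by (intro hat_pair hat_mult hat_const hat_fst hat_add hat_snd_comp hat_fst_comp hat_snd)
  have hQ: "hat (Qf \<alpha> \<rho> k) (\<theta>*fst x*(1+snd (snd x)), fst (snd x))"
    using hat_Q wD[OF z h' u] xe by simp
  have hu: "hat (\<lambda>x. fst (snd x)) x" by (intro hat_fst_comp hat_snd)
  have ha: "hat (\<lambda>x. \<alpha> (0, fst (snd x))) x"
  proof -
    have "hat (\<lambda>u. \<alpha> (0,u)) (fst (snd x))" using hat_a U0_sub[OF u] xe by simp
    from hat_compose[OF hu this] show ?thesis .
  qed
  have nn: "1 + snd (snd x) \<notin> \<real>\<^sub>\<le>\<^sub>0" using one_minus_small[of "-h"] h_small[OF h'] xe by simp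
  have hc: "hat (\<lambda>x. c (fst (snd x))) x"
  proof -
    have "hat (cf \<alpha> \<rho> k \<sigma> \<theta> p) (fst (snd x))"
      using hat_c[of u \<sigma>] U0_sub[OF u] h\<sigma> sig_props[OF u] xe by auto
    from hat_compose[OF hu this] show ?thesis unfolding c_def[abs_def] .
  qed
  have "hat (\<lambda>x. Qf \<alpha> \<rho> k (\<theta>*fst x*(1+snd (snd x)), fst (snd x)) - fst x^(k+1)/of_nat (k+1)
       + \<alpha> (0, fst (snd x)) * Ln (1 + snd (snd x)) - c (fst (snd x))) x"
    apply (intro hat_minus hat_add hat_mult hat_div_const hat_power hat_fst ha hc hat_Ln nn)
     apply (rule hat_compose[OF hw hQ])
    by (intro hat_add hat_const hat_snd_comp[OF hat_snd])+
  then show ?thesis unfolding F3_def[abs_def] F_def .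
qed

end


context Msetup
begin

definition G where "G x = (fst x, (fst (snd x), F3 x))"
definition g where "g = inv_into S G"

lemma G_cont: "continuous_on S G"
proof -
  have "continuous_on S F3"
    using hat_F3 hat_imp_continuous continuous_at_imp_continuous_on by blast
  then show ?thesis unfolding G_def[abs_def] by (intro continuous_intros)
qed

lemma hf_S: "z \<in> A \<Longrightarrow> u \<in> U0 \<Longrightarrow> (z, (u, hf z u)) \<in> S"
  using hf(3)[of z u] r by (auto simp: S_def)

lemma G_inj: "inj_on G S"
proof (rule inj_onI)
  fix x y assume x: "x \<in> S" and y: "y \<in> S" and e: "G x = G y"
  obtain z u h where xe: "x = (z,(u,h))" using prod_cases3 by blast
  obtain z' u' h' where ye: "y = (z',(u',h'))" using prod_cases3 by blast
  have zz: "z' = z" "u' = u" "F z u h = F z u h'" using e xe ye by (auto simp: G_def F3_def)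
  have "h = h'" using F_inj[of z u h h'] x y xe ye zz by (auto simp: S_def)
  then show "x = y" using xe ye zz by simp
qed

lemma gG: "x \<in> S \<Longrightarrow> g (G x) = x"
  unfolding g_def by (rule inv_into_f_f[OF G_inj])

lemma hat_hf:
  assumes z: "z \<in> A" and u: "u \<in> U0"
  shows "hat (\<lambda>y. hf (fst y) (snd y)) (z, u)"
proof -
  define x0 where "x0 = (z, (u, hf z u))"
  have x0S: "x0 \<in> S" unfolding x0_def by (rule hf_S[OF z u])
  have hF: "hat F3 x0" by (rule hat_F3[OF x0S])
  define L where "L = Dv F3 x0"
  have dL: "(F3 has_derivative L) (at x0)" and cL: "clin L" and bL: "bounded_linear L"
    using Dv[OF hF] unfolding L_def by auto
  define Fh where "Fh = L (0, (0, 1))"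
  have Lt: "L (0, (0, t)) = Fh * t" for t
  proof -
    have "(0::complex, (0::complex^'a, t)) = csmul t (0, (0, 1))" by simp
    then show ?thesis using cL unfolding clin_def Fh_def by (metis csmul_complex_eq mult.commute)
  qed
  have Ladd: "L (a, (b, t)) = L (a, (b, 0)) + Fh * t" for a b t
  proof -
    have "(a, (b, t)) = (a, (b, 0)) + (0::complex, (0::complex^'a, t))" by simp
    then have "L (a, (b, t)) = L (a, (b, 0)) + L (0, (0, t))"
      using linear_add[OF bounded_linear.linear[OF bL]] by metis
    then show ?thesis using Lt by simp
  qed
  have hr: "norm (hf z u) \<le> r" using hf(1)[OF z u] by simp
  have "Fh = Fd z u (hf z u)"
  proof -
    have d1: "((\<lambda>h. (z, (u, h))) has_derivative (\<lambda>t. (0, (0, t)))) (at (hf z u))"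
      by (auto intro!: derivative_eq_intros)
    have "((\<lambda>h. F3 (z, (u, h))) has_derivative (\<lambda>t. L (0, (0, t)))) (at (hf z u))"
      using has_derivative_compose[OF d1 dL[unfolded x0_def]] unfolding x0_def by (simp add: o_def)
    then have "((\<lambda>h. F z u h) has_field_derivative Fh) (at (hf z u))"
      unfolding has_field_derivative_def F3_def Lt by simp
    from DERIV_unique[OF this F_hderiv[OF z u hr]] show ?thesis .
  qed
  moreover have "Fd z u (hf z u) \<noteq> 0"
    using Fd_bound[OF z u hr] by auto
  ultimately have Fh0: "Fh \<noteq> 0" by simp
  define G' where "G' = (\<lambda>y::complex \<times> ((complex^'a) \<times> complex). (fst y, (fst (snd y), L y)))"
  define g' where "g' = (\<lambda>y::complex \<times> ((complex^'a) \<times> complex).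
      (fst y, (fst (snd y), (snd (snd y) - L (fst y, (fst (snd y), 0))) / Fh)))"
  have dG: "(G has_derivative G') (at x0)"
    unfolding G_def[abs_def] G'_def
    by (intro has_derivative_Pair has_derivative_fst has_derivative_snd has_derivative_ident dL)
  have id: "G' \<circ> g' = id"
  proof
    fix y :: "complex \<times> ((complex^'a) \<times> complex)"
    obtain a b e where ye: "y = (a, (b, e))" using prod_cases3 by blast
    show "(G' \<circ> g') y = id y"
    proof -
      have "L (a, (b, (e - L (a, (b, 0))) / Fh)) = e"
        unfolding Ladd[of a b "(e - L (a, (b, 0))) / Fh"] using Fh0 by simp
      then show ?thesis unfolding ye G'_def g'_def by simp
    qed
  qed
  have Gx0: "G x0 = (z, (u, 0))"
    unfolding G_def x0_def F3_def using hf(2)[OF z u] by simp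
  have dg: "(g has_derivative g') (at (z, (u, 0)))"
    using has_derivative_inverse_strong[OF open_S x0S G_cont gG dG id] Gx0 by simp
  have cg: "clin g'"
    unfolding clin_def g'_def
  proof (intro allI)
    fix c and y :: "complex \<times> ((complex^'a) \<times> complex)"
    obtain a b e where ye: "y = (a, (b, e))" using prod_cases3 by blast
    have "L (c * a, (csmul c b, 0)) = c * L (a, (b, 0))"
      using cL unfolding clin_def by (metis csmul_complex_eq csmul_prod_eq mult_zero_right)
    then show "(fst (csmul c y), fst (snd (csmul c y)), (snd (snd (csmul c y)) - L (fst (csmul c y), fst (snd (csmul c y)), 0)) / Fh) =
         csmul c (fst y, fst (snd y), (snd (snd y) - L (fst y, fst (snd y), 0)) / Fh)"
      unfolding ye by (simp add: algebra_simps)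
  qed
  have hg: "hat g (z, (u, 0))" unfolding hat_def using dg cg by blast
  have hin: "hat (\<lambda>y::complex \<times> (complex^'a). (fst y, (snd y, 0::complex))) (z, u)"
    by (intro hat_pair hat_fst hat_snd hat_const)
  have h2: "hat (\<lambda>y. snd (snd (g (fst y, (snd y, 0::complex))))) (z, u)"
    using hat_snd_comp[OF hat_snd_comp[OF hat_compose[OF hin]]] hg by simp
  show ?thesis
  proof (rule hat_transform[OF h2])
    show "open (A \<times> U0)" unfolding U0_def by (intro open_Times open_A open_ball)
    show "(z, u) \<in> A \<times> U0" using z u by simp
    fix y assume y: "y \<in> A \<times> U0"
    have "G (fst y, (snd y, hf (fst y) (snd y))) = (fst y, (snd y, 0))"
      unfolding G_def F3_def using hf(2) y by auto
    then have "g (fst y, (snd y, 0)) = (fst y, (snd y, hf (fst y) (snd y)))"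
      using gG[OF hf_S] y by (metis SigmaE fst_conv snd_conv)
    then show "hf (fst y) (snd y) = snd (snd (g (fst y, snd y, 0)))" by simp
  qed
qed

end


lemma alg3:
  fixes t z q hz A a w :: complex
  assumes "t \<noteq> 0" "z \<noteq> 0" "q \<noteq> 0" "w = t*z*q"
    and "(w^k + (A - a)/w) * (t*q + t*z*hz) - z^k + a * (inverse q * hz) = 0"
  shows "(w^k + A/w) * (t*q + t*z*hz) = z^k + a/z"
proof -
  have w0: "w \<noteq> 0" using assms(1-4) by simp
  have "(w^k + A/w) * (t*q + t*z*hz) = (w^k + (A - a)/w) * (t*q + t*z*hz) + a * (t*q + t*z*hz)/w"
    using w0 by (simp add: field_simps)
  also have "a * (t*q + t*z*hz)/w = a/z + a * (inverse q * hz)"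
    using assms(1-4) by (simp add: field_simps)
  finally show ?thesis using assms(5) by (simp add: algebra_simps)
qed

context Msetup
begin

definition phi where "phi x = \<theta> * fst x * (1 + hf (fst x) (snd x))"

lemma hat_phi: "x \<in> A \<times> U0 \<Longrightarrow> hat phi x"
proof -
  assume x: "x \<in> A \<times> U0"
  have "hat (\<lambda>x. hf (fst x) (snd x)) x" using hat_hf[of "fst x" "snd x"] x by auto
  then have "hat (\<lambda>x. \<theta> * fst x * (1 + hf (fst x) (snd x))) x"
    by (intro hat_mult hat_const hat_fst hat_add)
  then show ?thesis unfolding phi_def[abs_def] .
qed

lemma phi_bounds:
  assumes z: "z \<in> A" and u: "u \<in> U0"
  shows "phi (z,u) \<in> ball 0 R" "phi (z,u) \<noteq> 0"
proof -
  have hr: "norm (hf z u) \<le> r" using hf(1)[OF z u] by simp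
  show "phi (z,u) \<in> ball 0 R" using w_bound(1)[OF z hr] r \<rho> by (simp add: phi_def)
  show "phi (z,u) \<noteq> 0" using w_bound(3)[OF z hr] by (simp add: phi_def)
qed

lemma c0: "c 0 = 0"
proof -
  have a00: "\<alpha> (0, 0) = 0" using \<alpha>0 \<rho> by auto
  have "Qf \<alpha> \<rho> k (\<sigma> 0, 0) = p^(k+1)/of_nat (k+1)"
  proof -
    have e: "(\<theta>*p)^(k+1) = p^(k+1)" by (metis \<theta>(1) mult_1 power_mult_distrib)
    show ?thesis unfolding Qf_def \<sigma>0 using B_zero[OF \<alpha>0] e by simp
  qed
  then show ?thesis unfolding c_def cf_def using a00 by simp
qed

lemma hf_u0:
  assumes z: "z \<in> A"
  shows "hf z 0 = 0"
proof -
  have u: "0 \<in> U0" using \<delta>1 by (simp add: U0_def)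
  have "F z 0 0 = 0" unfolding F0[OF z] c0 using B_zero[OF \<alpha>0] by simp
  then show ?thesis using hf(4)[OF z u, of 0] r by simp
qed

lemma pA: "p \<in> A" using p by (simp add: A_def)

lemma hf_p:
  assumes u: "u \<in> U0"
  shows "hf p u = \<sigma> u / (\<theta>*p) - 1"
proof -
  let ?hp = "\<sigma> u / (\<theta>*p) - 1"
  have e1: "\<theta>*p*(1 + ?hp) = \<sigma> u" using sig_props(3)[OF u] by simp
  have e2: "1 + ?hp = \<sigma> u / (\<theta>*p)" by simp
  have "F p u ?hp = 0" unfolding F_def e1 unfolding e2 c_def cf_def by simp
  then show ?thesis using hf(4)[OF pA u] sig_props(1)[OF u] by simp
qed

lemma phi_p: "u \<in> U0 \<Longrightarrow> phi (p, u) = \<sigma> u"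
  using hf_p sig_props(3) by (simp add: phi_def)

lemma phi_0: "z \<in> A \<Longrightarrow> phi (z, 0) = \<theta> * z"
  using hf_u0 by (simp add: phi_def)

lemma phi_identity:
  assumes z: "z \<in> A" and u: "u \<in> U0"
  shows "(phi (z,u) ^ k + \<alpha> (phi (z,u), u) / phi (z,u)) * deriv (\<lambda>w. phi (w, u)) z = z ^ k + \<alpha> (0, u) / z"
proof -
  define h0 where "h0 = hf z u"
  have hr: "norm h0 \<le> r" using hf(1)[OF z u] by (simp add: h0_def)
  obtain hz where dH: "((\<lambda>w. hf w u) has_field_derivative hz) (at z)"
    using hat_slice1[OF hat_hf[OF z u]] by auto
  define w where "w = \<theta>*z*(1+h0)"
  define pz where "pz = \<theta>*(1+h0) + \<theta>*z*hz"
  have dphi: "((\<lambda>z. \<theta>*z*(1 + hf z u)) has_field_derivative pz) (at z)"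
    unfolding pz_def h0_def
    by (rule derivative_eq_intros refl dH | simp add: algebra_simps)+
  have der: "deriv (\<lambda>w. phi (w, u)) z = pz"
    using DERIV_imp_deriv[OF dphi] by (simp add: phi_def)
  have w0: "w \<noteq> 0" using w_bound(3)[OF z hr] by (simp add: w_def)
  have dQ: "((\<lambda>z. Qf \<alpha> \<rho> k (\<theta>*z*(1 + hf z u), u)) has_field_derivative
            (w^k + (\<alpha> (w,u) - \<alpha> (0,u))/w) * pz) (at z)"
  proof -
    have "((\<lambda>w. Qf \<alpha> \<rho> k (w,u)) has_field_derivative (w^k + (\<alpha> (w,u) - \<alpha> (0,u))/w)) (at (\<theta>*z*(1 + hf z u)))"
      using Q_wderiv[OF wD[OF z hr u] w0[unfolded w_def]] unfolding w_def h0_def .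
    from DERIV_chain2[OF this dphi] show ?thesis .
  qed
  have nn: "1 + h0 \<notin> \<real>\<^sub>\<le>\<^sub>0" using one_minus_small[of "-h0"] h_small[OF hr] by simp
  have dL: "((\<lambda>z. Ln (1 + hf z u)) has_field_derivative inverse (1+h0) * hz) (at z)"
  proof -
    have d1: "((\<lambda>z. 1 + hf z u) has_field_derivative hz) (at z)"
      using DERIV_add[OF DERIV_const dH] by simp
    from DERIV_chain2[OF has_field_derivative_Ln[OF nn[unfolded h0_def]] d1] show ?thesis
      unfolding h0_def .
  qed
  have dz: "((\<lambda>z. z^(k+1)/of_nat (k+1)) has_field_derivative z^k) (at z)"
  proof -
    have d: "((\<lambda>z. z^(k+1)) has_field_derivative of_nat (k+1) * z^k) (at z)"
      using DERIV_power[OF DERIV_ident, where n="k+1"] by simp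
    have "((\<lambda>z. z^(k+1)/of_nat (k+1)) has_field_derivative of_nat (k+1) * z^k / of_nat (k+1)) (at z)"
      by (rule DERIV_cdivide[OF d])
    moreover have "(of_nat (k+1)::complex) \<noteq> 0" by (simp only: of_nat_eq_0_iff)
    then have "of_nat (k+1) * z^k / of_nat (k+1) = z^k" by simp
    ultimately show ?thesis by simp
  qed
  have dK: "((\<lambda>z. F z u (hf z u)) has_field_derivative
      (w^k + (\<alpha> (w,u) - \<alpha> (0,u))/w) * pz - z^k + \<alpha> (0,u) * (inverse (1+h0) * hz) - 0) (at z)"
    unfolding F_def by (intro DERIV_diff DERIV_add DERIV_cmult dQ dz dL DERIV_const)
  have "((\<lambda>z. 0) has_field_derivative
      (w^k + (\<alpha> (w,u) - \<alpha> (0,u))/w) * pz - z^k + \<alpha> (0,u) * (inverse (1+h0) * hz) - 0) (at z)"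
    by (rule has_field_derivative_transform_within_open[OF dK open_A z]) (use hf(2) u in auto)
  then have K0: "(w^k + (\<alpha> (w,u) - \<alpha> (0,u))/w) * pz - z^k + \<alpha> (0,u) * (inverse (1+h0) * hz) = 0"
    using DERIV_unique DERIV_const by (metis diff_zero)
  have "(w^k + \<alpha> (w,u)/w) * (\<theta>*(1+h0) + \<theta>*z*hz) = z^k + \<alpha> (0,u)/z"
    apply (rule alg3[where q="1+h0"])
    using \<theta> zA[OF z] h_small[OF hr] w_def K0 pz_def by auto
  moreover have "phi (z,u) = w" by (simp add: phi_def w_def h0_def)
  ultimately show ?thesis unfolding der pz_def by simp
qed

end


lemma unif_small:
  fixes f :: "complex \<times> (complex^'n::finite) \<Rightarrow> complex"
  assumes K: "compact K" and cf: "continuous_on (K \<times> ball 0 d) f" and d: "d > 0"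
    and z: "\<forall>w\<in>K. f (w,0) = 0" and e: "e > 0"
  shows "\<exists>\<delta>>0. \<forall>w\<in>K. \<forall>u. norm u < \<delta> \<longrightarrow> norm (f (w,u)) \<le> e"
proof -
  have sub: "K \<times> cball 0 (d/2) \<subseteq> K \<times> ball 0 d" using d by auto
  have "uniformly_continuous_on (K \<times> cball 0 (d/2)) f"
    by (rule compact_uniformly_continuous[OF continuous_on_subset[OF cf sub]])
      (intro compact_Times K compact_cball)
  then obtain d1 where d1: "d1 > 0" "\<And>a b. a \<in> K \<times> cball 0 (d/2) \<Longrightarrow> b \<in> K \<times> cball 0 (d/2) \<Longrightarrow>
      dist a b < d1 \<Longrightarrow> dist (f a) (f b) < e"
    unfolding uniformly_continuous_on_def using e by metis
  show ?thesis
  proof (intro exI[of _ "min d1 (d/2)"] conjI ballI allI impI)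
    show "min d1 (d/2) > 0" using d d1 by simp
    fix w and u :: "complex^'n" assume w: "w \<in> K" and u: "norm u < min d1 (d/2)"
    have "dist (f (w,u)) (f (w,0)) < e"
      apply (rule d1(2)) using w u d by (auto simp: dist_prod_def dist_norm)
    then show "norm (f (w,u)) \<le> e" using z w by (simp add: dist_norm)
  qed
qed

lemma theta_props:
  fixes k :: nat and j :: int
  defines "\<theta> \<equiv> exp (2 * pi * \<i> * of_int j / of_nat (k + 1))"
  shows "\<theta>^(k+1) = 1" "norm \<theta> = 1"
proof -
  have "\<theta>^(k+1) = exp (of_nat (k+1) * (2 * pi * \<i> * of_int j / of_nat (k + 1)))"
    unfolding \<theta>_def by (rule exp_of_nat_mult[symmetric])
  also have "\<dots> = exp ((2 * of_int j * pi) * \<i>)"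
    by (simp del: of_nat_Suc add: field_simps)
  also have "\<dots> = 1" by (rule exp_integer_2pi) simp
  finally show "\<theta>^(k+1) = 1" .
  show "norm \<theta> = 1" unfolding \<theta>_def by (simp add: norm_exp_eq_Re)
qed

lemma small_power:
  fixes k :: nat
  shows "\<exists>e>0. \<forall>h::complex. norm h \<le> e \<longrightarrow> norm ((1+h)^k - 1) \<le> 1/4"
proof -
  have "isCont (\<lambda>h::complex. (1+h)^k) 0" by (intro continuous_intros)
  then obtain d where d: "d > 0" "\<And>h::complex. dist h 0 < d \<Longrightarrow> dist ((1+h)^k) ((1+0)^k) < 1/4"
    unfolding continuous_at_eps_delta by (metis zero_less_divide_1_iff zero_less_numeral)
  show ?thesis
  proof (intro exI[of _ "d/2"] conjI allI impI)
    show "d/2 > 0" using d by simp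
    fix h :: complex assume "norm h \<le> d/2"
    then have "dist h 0 < d" using d by simp
    from d(2)[OF this] show "norm ((1+h)^k - 1) \<le> 1/4" by (simp add: dist_norm)
  qed
qed

theorem theorem4p3:
  fixes k :: nat and R1 R2 R :: real and U :: "(complex ^ 'n) set"
    and \<alpha> :: "complex \<times> (complex ^ 'n) \<Rightarrow> complex"
    and \<sigma> :: "complex ^ 'n \<Rightarrow> complex" and j :: int and p :: complex
  assumes "0 < R1" "R1 < R2" "R2 < R"
    and "open U" "0 \<in> U"
    and "holo_prod \<alpha> (ball 0 R \<times> U)"
    and "\<forall>z\<in>ball 0 R. \<alpha> (z, 0) = 0"
    and "R1 < cmod p" "cmod p < R2"
    and "holo_vec \<sigma> U" "\<forall>u\<in>U. \<sigma> u \<in> ball 0 R"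
    and "\<sigma> 0 = exp (2 * pi * \<i> * of_int j / of_nat (k + 1)) * p"
  shows "\<exists>U0 \<phi>. open U0 \<and> 0 \<in> U0 \<and> U0 \<subseteq> U \<and>
      holo_prod \<phi> ({z. R1 < cmod z \<and> cmod z < R2} \<times> U0) \<and>
      (\<forall>z\<in>{z. R1 < cmod z \<and> cmod z < R2}. \<forall>u\<in>U0. \<phi> (z, u) \<in> ball 0 R) \<and>
      (\<forall>u\<in>U0. \<forall>z\<in>{z. R1 < cmod z \<and> cmod z < R2}.
          \<phi> (z, u) \<noteq> 0 \<and>
          (\<phi> (z, u) ^ k + \<alpha> (\<phi> (z, u), u) / \<phi> (z, u)) * deriv (\<lambda>w. \<phi> (w, u)) z
            = z ^ k + \<alpha> (0, u) / z) \<and>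
      (\<forall>z\<in>{z. R1 < cmod z \<and> cmod z < R2}.
          \<phi> (z, 0) = exp (2 * pi * \<i> * of_int j / of_nat (k + 1)) * z) \<and>
      (\<forall>u\<in>U0. \<phi> (p, u) = \<sigma> u)"
proof -
  define \<theta> where "\<theta> = exp (2 * pi * \<i> * of_int j / of_nat (k + 1))"
  have \<theta>: "\<theta>^(k+1) = 1" "norm \<theta> = 1" using theta_props unfolding \<theta>_def by auto
  have \<sigma>0: "\<sigma> 0 = \<theta> * p" using assms(12) unfolding \<theta>_def .
  define \<rho> where "\<rho> = (R2 + R)/2"
  have \<rho>: "R2 < \<rho>" "\<rho> < R" "0 < \<rho>" using assms(1-3) by (auto simp: \<rho>_def)
  obtain \<delta>0 where \<delta>0: "\<delta>0 > 0" "ball 0 \<delta>0 \<subseteq> U" using openE[OF assms(4,5)] by metis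
  have h\<alpha>: "\<forall>x\<in>ball 0 R \<times> U. hat \<alpha> x" using assms(6) by (simp only: holo_prod_hat)
  have h\<sigma>: "\<forall>u\<in>U. hat \<sigma> u" using assms(10) by (simp only: holo_vec_hat)
  interpret B: Bsetup \<alpha> R \<rho> \<delta>0 U
    by unfold_locales (use assms(4) h\<alpha> \<rho> \<delta>0 in auto)
  obtain e0 where e0: "e0 > 0" "\<forall>h::complex. norm h \<le> e0 \<longrightarrow> norm ((1+h)^k - 1) \<le> 1/4"
    using small_power by blast
  define r where "r = min (1/4) (min e0 ((\<rho>/R2 - 1)/2))"
  have rpos: "(\<rho>/R2 - 1)/2 > 0" using \<rho> assms(1,2) by (simp add: field_simps)
  have r1: "0 < r" "r \<le> 1/4" using rpos e0 unfolding r_def by linarith+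
  have r2: "R2*(1+r) < \<rho>"
  proof -
    have "R2*(1+r) \<le> R2*(1 + (\<rho>/R2 - 1)/2)"
    proof -
      have rle: "r \<le> (\<rho>/R2 - 1)/2" unfolding r_def by (rule min.coboundedI2, rule min.cobounded2)
      show ?thesis using assms(1,2) rle by (intro mult_left_mono) auto
    qed
    also have "\<dots> = (R2 + \<rho>)/2" using assms(1,2) by (simp add: field_simps)
    also have "\<dots> < \<rho>" using \<rho> by simp
    finally show ?thesis .
  qed
  have r3: "\<forall>h::complex. norm h \<le> r \<longrightarrow> norm ((1+h)^k - 1) \<le> 1/4"
    using e0 unfolding r_def by (meson min.boundedE order_trans)
  define K where "K = cball (0::complex) (R2*(1+r))"
  have KR: "K \<subseteq> ball 0 \<rho>" using r2 by (auto simp: K_def)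
  have R1p: "R1^(k+1) > 0" using assms(1) by simp
  obtain d2 where d2: "d2 > 0" "\<forall>w\<in>K. \<forall>u. norm u < d2 \<longrightarrow> norm (\<alpha> (w,u)) \<le> R1^(k+1)/32"
  proof -
    have "continuous_on (ball 0 R \<times> U) \<alpha>" by (rule B.cont_\<alpha>)
    moreover have "K \<times> ball 0 \<delta>0 \<subseteq> ball 0 R \<times> U" using KR \<rho> \<delta>0 by auto
    ultimately have "continuous_on (K \<times> ball 0 \<delta>0) \<alpha>" by (rule continuous_on_subset)
    moreover have "\<forall>w\<in>K. \<alpha> (w,0) = 0" using assms(7) KR \<rho> by auto
    ultimately show ?thesis using unif_small[of K \<delta>0 \<alpha> "R1^(k+1)/32"] that \<delta>0 R1p
      by (auto simp: K_def)
  qed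
  obtain d3 where d3: "d3 > 0" "\<forall>w\<in>K. \<forall>u. norm u < d3 \<longrightarrow> norm (Bfun \<alpha> \<rho> (w,u)) \<le> r*R1^(k+1)/8"
  proof -
    have "K \<times> ball 0 \<delta>0 \<subseteq> ball 0 \<rho> \<times> ball 0 \<delta>0" using KR by auto
    with B.cont_B have "continuous_on (K \<times> ball 0 \<delta>0) (Bfun \<alpha> \<rho>)" by (rule continuous_on_subset)
    moreover have "\<forall>w\<in>K. Bfun \<alpha> \<rho> (w,0) = 0" using B.B_zero[OF assms(7)] by auto
    ultimately show ?thesis using unif_small[of K \<delta>0 "Bfun \<alpha> \<rho>" "r*R1^(k+1)/8"] that \<delta>0 R1p r1
      by (auto simp: K_def)
  qed
  have tp: "\<theta>*p \<noteq> 0" "norm (\<theta>*p) = norm p" using \<theta> assms(1,8) by (auto simp: norm_mult)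
  have cf0: "cf \<alpha> \<rho> k \<sigma> \<theta> p 0 = 0"
  proof -
    have a00: "\<alpha> (0, 0) = 0" using assms(7) \<rho> by auto
    have e: "(\<theta>*p)^(k+1) = p^(k+1)" by (metis \<theta>(1) mult_1 power_mult_distrib)
    have "Qf \<alpha> \<rho> k (\<sigma> 0, 0) = p^(k+1)/of_nat (k+1)"
      unfolding Qf_def \<sigma>0 using B.B_zero[OF assms(7)] e by simp
    then show ?thesis unfolding cf_def using a00 by simp
  qed
  obtain d4 where d4: "d4 > 0" "\<forall>u. norm u < d4 \<longrightarrow> norm (cf \<alpha> \<rho> k \<sigma> \<theta> p u) \<le> r*R1^(k+1)/8"
  proof -
    have "hat (cf \<alpha> \<rho> k \<sigma> \<theta> p) 0"
      apply (rule B.hat_c)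
      using \<delta>0 h\<sigma> assms(5) \<sigma>0 tp \<rho> assms(9) by auto
    then have "continuous (at 0) (cf \<alpha> \<rho> k \<sigma> \<theta> p)" by (rule hat_imp_continuous)
    moreover have "r*R1^(k+1)/8 > 0" using r1 R1p by simp
    ultimately obtain d where "d > 0" "\<And>u. dist u 0 < d \<Longrightarrow> dist (cf \<alpha> \<rho> k \<sigma> \<theta> p u) (cf \<alpha> \<rho> k \<sigma> \<theta> p 0) < r*R1^(k+1)/8"
      unfolding continuous_at_eps_delta by metis
    then show ?thesis using that[of d] cf0 by (simp add: dist_norm less_imp_le)
  qed
  obtain d5 where d5: "d5 > 0" "\<forall>u. norm u < d5 \<longrightarrow> norm (\<sigma> u / (\<theta>*p) - 1) \<le> r"
  proof -
    have "continuous (at 0) \<sigma>" using hat_imp_continuous h\<sigma> assms(5) by blast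
    moreover have "r * norm p > 0" using r1 assms(1,8) by (intro mult_pos_pos) auto
    ultimately obtain d where d: "d > 0" "\<And>u. dist u 0 < d \<Longrightarrow> dist (\<sigma> u) (\<sigma> 0) < r * norm p"
      unfolding continuous_at_eps_delta by metis
    have "norm (\<sigma> u / (\<theta>*p) - 1) \<le> r" if "norm u < d" for u
    proof -
      have "norm (\<sigma> u - \<theta>*p) < r * norm p" using d(2)[of u] that \<sigma>0 by (simp add: dist_norm)
      moreover have "\<sigma> u / (\<theta>*p) - 1 = (\<sigma> u - \<theta>*p) / (\<theta>*p)" using tp by (simp add: field_simps)
      ultimately show ?thesis using tp assms(1,8) by (simp add: norm_divide divide_le_eq)
    qed
    then show ?thesis using that[of d] d by blast
  qed
  define \<delta>1 where "\<delta>1 = min (min \<delta>0 d2) (min d3 (min d4 d5))"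
  have \<delta>1: "0 < \<delta>1" "\<delta>1 \<le> \<delta>0" using \<delta>0 d2 d3 d4 d5 by (auto simp: \<delta>1_def)
  interpret M: Msetup \<alpha> R \<rho> \<delta>0 U k R1 R2 \<sigma> \<theta> p r \<delta>1
  proof unfold_locales
    show "0 < R1" "R1 < R2" "R2 < \<rho>" using assms(1,2) \<rho> by auto
    show "\<forall>z\<in>ball 0 R. \<alpha> (z,0) = 0" by (rule assms(7))
    show "R1 < norm p" "norm p < R2" using assms(8,9) by auto
    show "\<forall>u\<in>U. hat \<sigma> u" by (rule h\<sigma>)
    show "\<sigma> 0 = \<theta> * p" by (rule \<sigma>0)
    show "\<theta>^(k+1) = 1" "norm \<theta> = 1" by (rule \<theta>(1), rule \<theta>(2))
    show "0 < r" "r \<le> 1/4" "R2*(1+r) < \<rho>" "\<forall>h::complex. norm h \<le> r \<longrightarrow> norm ((1+h)^k - 1) \<le> 1/4"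
      using r1 r2 r3 by auto
    show "0 < \<delta>1" "\<delta>1 \<le> \<delta>0" by (rule \<delta>1(1), rule \<delta>1(2))
    show "\<forall>w u. norm w \<le> R2*(1+r) \<longrightarrow> norm u < \<delta>1 \<longrightarrow> norm (\<alpha> (w,u)) \<le> R1^(k+1)/32"
      using d2 by (auto simp: \<delta>1_def K_def)
    show "\<forall>w u. norm w \<le> R2*(1+r) \<longrightarrow> norm u < \<delta>1 \<longrightarrow> norm (Bfun \<alpha> \<rho> (w,u)) \<le> r*R1^(k+1)/8"
      using d3 by (auto simp: \<delta>1_def K_def)
    show "\<forall>u. norm u < \<delta>1 \<longrightarrow> norm (cf \<alpha> \<rho> k \<sigma> \<theta> p u) \<le> r*R1^(k+1)/8"
      using d4 by (auto simp: \<delta>1_def)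
    show "\<forall>u. norm u < \<delta>1 \<longrightarrow> norm (\<sigma> u/(\<theta>*p) - 1) \<le> r"
      using d5 by (auto simp: \<delta>1_def)
  qed
  have Aeq: "{z. R1 < cmod z \<and> cmod z < R2} = M.A" by (simp add: M.A_def)
  have U0eq: "ball 0 \<delta>1 = M.U0" by (simp add: M.U0_def)
  show ?thesis unfolding Aeq U0eq
  proof (intro exI[of _ "M.U0"] exI[of _ M.phi] conjI ballI)
    show "open M.U0" by (simp add: M.U0_def)
    show "0 \<in> M.U0" using \<delta>1 by (simp add: M.U0_def)
    show "M.U0 \<subseteq> U" using \<delta>1 \<delta>0 by (auto simp: M.U0_def)
    show "holo_prod M.phi (M.A \<times> M.U0)"
      unfolding holo_prod_hat using M.hat_phi by simp
    fix z u assume z: "z \<in> M.A" and u: "u \<in> M.U0"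
    show "M.phi (z, u) \<in> ball 0 R" by (rule M.phi_bounds(1)[OF z u])
  next
    fix u z assume u: "u \<in> M.U0" and z: "z \<in> M.A"
    show "M.phi (z, u) \<noteq> 0" by (rule M.phi_bounds(2)[OF z u])
    show "(M.phi (z, u) ^ k + \<alpha> (M.phi (z, u), u) / M.phi (z, u)) * deriv (\<lambda>w. M.phi (w, u)) z =
          z ^ k + \<alpha> (0, u) / z"
      by (rule M.phi_identity[OF z u])
  next
    fix z assume z: "z \<in> M.A"
    show "M.phi (z, 0) = exp (2 * pi * \<i> * of_int j / of_nat (k + 1)) * z"
      using M.phi_0[OF z] unfolding \<theta>_def .
  next
    fix u assume u: "u \<in> M.U0"
    show "M.phi (p, u) = \<sigma> u" by (rule M.phi_p[OF u])
  qed
qed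


end
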